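(* Let $F$ be an infinite field and $n=3$. There is no infinite sequence $f_1,f_2,\dots$ of polynomials of type $(1,1)$ such that $f_i\notin\langle\{f_1,\dots,f_{i-1}\}\cup I\rangle_{T_{\mathbb{Z}_3}}$ for all $i\ge2$. Consequently, for every $T_{\mathbb{Z}_3}$-ideal $J\supseteq I$, there is a finite set $\mathcal{A}'$ of polynomials of type $(1,1)$ in $J$ such that every polynomial of type $(1,1)$ in $J$ lies in $\langle\mathcal{A}'\cup I\rangle_{T_{\mathbb{Z}_3}}$.
   Context: $I$ is the $T_{\mathbb{Z}_3}$-ideal of graded identities of $UT_3(F)^{(-)}$ ($3\times3$ upper triangular matrices, bracket $[a,b]=ab-ba$, canonical grading with degree-$k$ component spanned by $e_{ij}$, $j-i=k$) in the free Lie algebra on variables $y_i$ (degree $0$), $z_i$ (degree $1$), $w_i$ (degree $2$). Commutators are left normed. $\mathcal{B}_{(1,1)}$ is the set of commutators $[z_1,a_1y_1,\dots,a_ny_n,z_2,b_1y_1,\dots,b_ny_n]$ ($z_1$, then $y_i$ repeated $a_i$ times, then $z_2$, then $y_i$ repeated $b_i$ times), with $z_1,z_2$ distinct degree-$1$ variables, $n\ge0$, $a_i,b_i\ge0$. A polynomial of type $(1,1)$ is a multihomogeneous polynomial that is a linear combination of elements of $\mathcal{B}_{(1,1)}$. *)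

theory Defs
  imports Main
begin

datatype var = Y nat | Z nat | W nat

fun vdeg :: "var \<Rightarrow> nat" where
  "vdeg (Y _) = 0" | "vdeg (Z _) = 1" | "vdeg (W _) = 2"

text \<open>Free associative algebra F<X>: noncommutative polynomials, represented as
  coefficient functions on words with finite support. The free Lie algebra is
  realised (Witt) as the Lie subalgebra generated by the variables under the commutator.\<close>
type_synonym 'a fa = "var list \<Rightarrow> 'a"

definition supp :: "'a::zero fa \<Rightarrow> var list set" where
  "supp p = {w. p w \<noteq> 0}"

definition fa_var :: "var \<Rightarrow> 'a::{zero,one} fa" where
  "fa_var x = (\<lambda>w. if w = [x] then 1 else 0)"

definition fa_one :: "'a::{zero,one} fa" where
  "fa_one = (\<lambda>w. if w = [] then 1 else 0)"

definition fa_zero :: "'a::zero fa" where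
  "fa_zero = (\<lambda>w. 0)"

definition fa_add :: "'a::plus fa \<Rightarrow> 'a fa \<Rightarrow> 'a fa" where
  "fa_add p q = (\<lambda>w. p w + q w)"

definition fa_smult :: "'a::times \<Rightarrow> 'a fa \<Rightarrow> 'a fa" where
  "fa_smult c p = (\<lambda>w. c * p w)"

definition fa_mul :: "'a::comm_ring_1 fa \<Rightarrow> 'a fa \<Rightarrow> 'a fa" where
  "fa_mul p q = (\<lambda>w. \<Sum>i\<in>{0..length w}. p (take i w) * q (drop i w))"

definition bracket :: "'a::comm_ring_1 fa \<Rightarrow> 'a fa \<Rightarrow> 'a fa" where
  "bracket p q = (\<lambda>w. fa_mul p q w - fa_mul q p w)"

definition lnc :: "'a::comm_ring_1 fa \<Rightarrow> 'a fa list \<Rightarrow> 'a fa" where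
  "lnc x xs = foldl bracket x xs"

inductive_set lie :: "'a::comm_ring_1 fa set" where
  lie_var: "fa_var x \<in> lie"
| lie_zero: "fa_zero \<in> lie"
| lie_add: "p \<in> lie \<Longrightarrow> q \<in> lie \<Longrightarrow> fa_add p q \<in> lie"
| lie_smult: "p \<in> lie \<Longrightarrow> fa_smult c p \<in> lie"
| lie_bracket: "p \<in> lie \<Longrightarrow> q \<in> lie \<Longrightarrow> bracket p q \<in> lie"

definition wdeg :: "var list \<Rightarrow> nat" where
  "wdeg w = (sum_list (map vdeg w)) mod 3"

definition homogeneous_of :: "nat \<Rightarrow> 'a::zero fa \<Rightarrow> bool" where
  "homogeneous_of k p \<longleftrightarrow> (\<forall>w. p w \<noteq> 0 \<longrightarrow> wdeg w = k)"

definition fa_prod :: "'a::comm_ring_1 fa list \<Rightarrow> 'a fa" where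
  "fa_prod ps = foldr fa_mul ps fa_one"

definition subst :: "(var \<Rightarrow> 'a::comm_ring_1 fa) \<Rightarrow> 'a fa \<Rightarrow> 'a fa" where
  "subst \<sigma> p = (\<lambda>w. \<Sum>u\<in>supp p. p u * fa_prod (map \<sigma> u) w)"

definition graded_endo :: "(var \<Rightarrow> 'a::comm_ring_1 fa) \<Rightarrow> bool" where
  "graded_endo \<sigma> \<longleftrightarrow> (\<forall>x. \<sigma> x \<in> lie \<and> homogeneous_of (vdeg x) (\<sigma> x))"

definition T_ideal :: "'a::comm_ring_1 fa set \<Rightarrow> bool" where
  "T_ideal J \<longleftrightarrow> J \<subseteq> lie \<and> fa_zero \<in> J
     \<and> (\<forall>p\<in>J. \<forall>q\<in>J. fa_add p q \<in> J)
     \<and> (\<forall>c. \<forall>p\<in>J. fa_smult c p \<in> J)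
     \<and> (\<forall>p\<in>J. \<forall>q\<in>lie. bracket p q \<in> J)
     \<and> (\<forall>p\<in>J. \<forall>\<sigma>. graded_endo \<sigma> \<longrightarrow> subst \<sigma> p \<in> J)"

definition T_gen :: "'a::comm_ring_1 fa set \<Rightarrow> 'a fa set" where
  "T_gen S = \<Inter>{J. T_ideal J \<and> S \<subseteq> J}"

text \<open>3x3 matrices (indices 0,1,2), as functions; only entries < 3 are meaningful.\<close>
type_synonym 'a mat = "nat \<Rightarrow> nat \<Rightarrow> 'a"

definition mmul :: "'a::comm_ring_1 mat \<Rightarrow> 'a mat \<Rightarrow> 'a mat" where
  "mmul A B = (\<lambda>i j. \<Sum>k<3. A i k * B k j)"

definition mone :: "'a::comm_ring_1 mat" where
  "mone = (\<lambda>i j. if i = j then 1 else 0)"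

definition mprod :: "'a::comm_ring_1 mat list \<Rightarrow> 'a mat" where
  "mprod As = foldr mmul As mone"

text \<open>Evaluation (associative, hence Lie for commutators) homomorphism into M_3(F).\<close>
definition evalM :: "(var \<Rightarrow> 'a::comm_ring_1 mat) \<Rightarrow> 'a fa \<Rightarrow> 'a mat" where
  "evalM \<phi> p = (\<lambda>i j. \<Sum>u\<in>supp p. p u * mprod (map \<phi> u) i j)"

definition graded_UT3_subst :: "(var \<Rightarrow> 'a::comm_ring_1 mat) \<Rightarrow> bool" where
  "graded_UT3_subst \<phi> \<longleftrightarrow>
     (\<forall>x i j. i < 3 \<longrightarrow> j < 3 \<longrightarrow> \<phi> x i j \<noteq> 0 \<longrightarrow> j = i + vdeg x)"

definition I_UT3 :: "'a::comm_ring_1 fa set" where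
  "I_UT3 = {f \<in> lie. \<forall>\<phi>. graded_UT3_subst \<phi> \<longrightarrow>
               (\<forall>i<3. \<forall>j<3. evalM \<phi> f i j = 0)}"

definition ys_block :: "nat \<Rightarrow> (nat \<Rightarrow> nat) \<Rightarrow> 'a::comm_ring_1 fa list" where
  "ys_block n a = concat (map (\<lambda>i. replicate (a i) (fa_var (Y i))) [1..<n+1])"

definition B11 :: "'a::comm_ring_1 fa set" where
  "B11 = {lnc (fa_var (Z 1)) (ys_block n a @ [fa_var (Z 2)] @ ys_block n b) | n a b. True}"

inductive_set lin_span :: "'a::comm_ring_1 fa set \<Rightarrow> 'a fa set" for B where
  ls_zero: "fa_zero \<in> lin_span B"
| ls_step: "b \<in> B \<Longrightarrow> p \<in> lin_span B \<Longrightarrow> fa_add (fa_smult c b) p \<in> lin_span B"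

definition multihomogeneous :: "'a::zero fa \<Rightarrow> bool" where
  "multihomogeneous p \<longleftrightarrow> (\<exists>m. \<forall>w. p w \<noteq> 0 \<longrightarrow> (\<forall>x. count_list w x = m x))"

definition type11 :: "'a::comm_ring_1 fa \<Rightarrow> bool" where
  "type11 f \<longleftrightarrow> multihomogeneous f \<and> f \<in> lin_span B11"

end

theory Submission
  imports Defs "HOL-Library.Multiset_Order" "HOL-Library.Ramsey"
begin


definition good :: "('b \<Rightarrow> 'b \<Rightarrow> bool) \<Rightarrow> (nat \<Rightarrow> 'b) \<Rightarrow> bool" where
  "good P f \<longleftrightarrow> (\<exists>i j. i < j \<and> P (f i) (f j))"

definition wqo :: "('b \<Rightarrow> 'b \<Rightarrow> bool) \<Rightarrow> bool" where
  "wqo P \<longleftrightarrow> (\<forall>f. good P f)"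

lemma wqo_subseq:
  fixes f :: "nat \<Rightarrow> 'b"
  assumes "wqo P"
  shows "\<exists>\<phi>::nat\<Rightarrow>nat. strict_mono \<phi> \<and> (\<forall>i j. i < j \<longrightarrow> P (f (\<phi> i)) (f (\<phi> j)))"
proof -
  define c where "c = (\<lambda>X::nat set. if P (f (Min X)) (f (Max X)) then 0 else (1::nat))"
  have "\<forall>x\<in>(UNIV::nat set). \<forall>y\<in>UNIV. x \<noteq> y \<longrightarrow> c {x, y} < 2" by (simp add: c_def)
  then obtain YY t where YY: "infinite YY" "t < 2" "\<forall>x\<in>YY. \<forall>y\<in>YY. x \<noteq> y \<longrightarrow> c {x, y} = t"
    using Ramsey2[of "UNIV::nat set" c 2] by auto
  define \<phi> where "\<phi> = enumerate YY"
  have sm: "strict_mono \<phi>" using YY(1) by (simp add: \<phi>_def strict_mono_enumerate)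
  have inY: "\<phi> i \<in> YY" for i using YY(1) by (simp add: \<phi>_def enumerate_in_set)
  have col: "c {\<phi> i, \<phi> j} = t" if "i < j" for i j
  proof -
    have "\<phi> i \<noteq> \<phi> j" using sm that by (metis less_not_refl strict_mono_less)
    then show ?thesis using YY(3) inY by blast
  qed
  have cij: "c {\<phi> i, \<phi> j} = (if P (f (\<phi> i)) (f (\<phi> j)) then 0 else 1)" if "i < j" for i j
  proof -
    have "\<phi> i < \<phi> j" using sm that by (simp add: strict_mono_less)
    then have "Min {\<phi> i, \<phi> j} = \<phi> i" "Max {\<phi> i, \<phi> j} = \<phi> j" by auto
    then show ?thesis by (simp add: c_def)
  qed
  show ?thesis
  proof (cases "t = 0")
    case True
    have "P (f (\<phi> i)) (f (\<phi> j))" if "i < j" for i j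
    proof (rule ccontr)
      assume nP: "\<not> P (f (\<phi> i)) (f (\<phi> j))"
      have "c {\<phi> i, \<phi> j} = 1" using cij[OF that] nP by simp
      then show False using col[OF that] True by simp
    qed
    then show ?thesis using sm by (intro exI[of _ \<phi>]) simp
  next
    case False
    have "good P (f \<circ> \<phi>)" using assms by (simp add: wqo_def)
    then obtain i j where "i < j" "P (f (\<phi> i)) (f (\<phi> j))" by (auto simp: good_def)
    then have "c {\<phi> i, \<phi> j} = 0" using cij[of i j] by simp
    then show ?thesis using col[of i j] \<open>i < j\<close> False by simp
  qed
qed

lemma wqo_nat: "wqo ((\<le>) :: nat \<Rightarrow> nat \<Rightarrow> bool)"
  unfolding wqo_def good_def
proof
  fix f :: "nat \<Rightarrow> nat"
  obtain i where i: "\<forall>k. f i \<le> f k"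
    using ex_has_least_nat[of "\<lambda>_. True" 0 f] by auto
  show "\<exists>i j. i < j \<and> f i \<le> f j" using i by (intro exI[of _ i] exI[of _ "Suc i"]) auto
qed

lemma wqo_prod:
  fixes P :: "'c \<Rightarrow> 'c \<Rightarrow> bool" and Q :: "'d \<Rightarrow> 'd \<Rightarrow> bool"
  assumes "wqo P" "wqo Q"
  shows "wqo (\<lambda>x y. P (fst x) (fst y) \<and> Q (snd x) (snd y))"
  unfolding wqo_def good_def
proof
  fix f :: "nat \<Rightarrow> 'c \<times> 'd"
  obtain \<phi> :: "nat \<Rightarrow> nat" where \<phi>: "strict_mono \<phi>" "\<forall>i j. i < j \<longrightarrow> P (fst (f (\<phi> i))) (fst (f (\<phi> j)))"
    using wqo_subseq[OF assms(1), of "fst \<circ> f"] by auto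
  have "good Q (snd \<circ> f \<circ> \<phi>)" using assms(2) by (simp add: wqo_def)
  then obtain i j where "i < j" "Q (snd (f (\<phi> i))) (snd (f (\<phi> j)))" by (auto simp: good_def)
  then show "\<exists>i j. i < j \<and> P (fst (f i)) (fst (f j)) \<and> Q (snd (f i)) (snd (f j))"
    using \<phi> by (intro exI[of _ "\<phi> i"] exI[of _ "\<phi> j"]) (auto simp: strict_mono_less)
qed

inductive emb :: "('b \<Rightarrow> 'b \<Rightarrow> bool) \<Rightarrow> 'b list \<Rightarrow> 'b list \<Rightarrow> bool" for P where
  emb_nil: "emb P [] ys"
| emb_skip: "emb P xs ys \<Longrightarrow> emb P xs (y # ys)"
| emb_match: "P x y \<Longrightarrow> emb P xs ys \<Longrightarrow> emb P (x # xs) (y # ys)"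

section \<open>Higman's lemma via minimal bad sequences\<close>

context
  fixes P :: "'b \<Rightarrow> 'b \<Rightarrow> bool"
  assumes wP: "wqo P"
begin

definition BAD :: "(nat \<Rightarrow> 'b list) set" where
  "BAD = {f. \<not> good (emb P) f}"

definition bext :: "'b list list \<Rightarrow> (nat \<Rightarrow> 'b list) \<Rightarrow> bool" where
  "bext pr g \<longleftrightarrow> (\<forall>k<length pr. g k = pr ! k)"

definition bchoose ::"'b list list \<Rightarrow> 'b list" where
  "bchoose pr = (SOME x. \<exists>g\<in>BAD. bext pr g \<and> g (length pr) = x \<and>
      (\<forall>g'\<in>BAD. bext pr g' \<longrightarrow> length x \<le> length (g' (length pr))))"

primrec bpre :: "nat \<Rightarrow> 'b list list" where
  "bpre 0 = []"
| "bpre (Suc n) = bpre n @ [bchoose (bpre n)]"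

lemma length_bpre[simp]: "length (bpre n) = n"
  by (induction n) auto

lemma bchoose_spec:
  assumes "g \<in> BAD" "bext p g"
  shows "\<exists>g\<in>BAD. bext p g \<and> g (length p) = bchoose p \<and>
      (\<forall>g'\<in>BAD. bext p g' \<longrightarrow> length (bchoose p) \<le> length (g' (length p)))"
proof -
  define L where "L = (LEAST l. \<exists>g\<in>BAD. bext p g \<and> length (g (length p)) = l)"
  have "\<exists>g\<in>BAD. bext p g \<and> length (g (length p)) = L"
    unfolding L_def by (rule LeastI[of _ "length (g (length p))"]) (use assms in auto)
  then obtain g0 where g0: "g0 \<in> BAD" "bext p g0" "length (g0 (length p)) = L" by auto
  have min: "\<forall>g'\<in>BAD. bext p g' \<longrightarrow> L \<le> length (g' (length p))"
    unfolding L_def by (auto intro: Least_le)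
  have "\<exists>x. \<exists>g\<in>BAD. bext p g \<and> g (length p) = x \<and>
      (\<forall>g'\<in>BAD. bext p g' \<longrightarrow> length x \<le> length (g' (length p)))"
    using g0 min by (intro exI[of _ "g0 (length p)"]) auto
  then show ?thesis unfolding bchoose_def by (rule someI_ex)
qed

lemma bpre_inv:
  assumes "BAD \<noteq> {}"
  shows "\<exists>g\<in>BAD. bext (bpre n) g"
proof (induction n)
  case 0
  then show ?case using assms by (auto simp: bext_def)
next
  case (Suc n)
  then obtain g where "g \<in> BAD" "bext (bpre n) g" by auto
  from bchoose_spec[OF this] obtain g' where g': "g' \<in> BAD" "bext (bpre n) g'"
    "g' n = bchoose (bpre n)" by auto
  have "bext (bpre (Suc n)) g'"
    using g' by (auto simp: bext_def nth_append less_Suc_eq)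
  then show ?case using g' by auto
qed

definition mbs :: "nat \<Rightarrow> 'b list" where
  "mbs n = bchoose (bpre n)"

lemma bpre_nth: "k < n \<Longrightarrow> bpre n ! k = mbs k"
proof (induction n)
  case 0 then show ?case by simp
next
  case (Suc n)
  then show ?case by (auto simp: nth_append mbs_def less_Suc_eq)
qed

lemma mbs_props:
  assumes "BAD \<noteq> {}"
  shows "\<exists>g\<in>BAD. (\<forall>k\<le>n. g k = mbs k)"
    and "\<forall>g'\<in>BAD. (\<forall>k<n. g' k = mbs k) \<longrightarrow> length (mbs n) \<le> length (g' n)"
proof -
  obtain g where g: "g \<in> BAD" "bext (bpre n) g" using bpre_inv[OF assms] by auto
  from bchoose_spec[OF this] obtain g' where g': "g' \<in> BAD" "bext (bpre n) g'"
    "g' n = mbs n" "\<forall>g''\<in>BAD. bext (bpre n) g'' \<longrightarrow> length (mbs n) \<le> length (g'' n)"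
    by (auto simp: mbs_def)
  show "\<exists>g\<in>BAD. (\<forall>k\<le>n. g k = mbs k)"
    using g' by (intro bexI[of _ g']) (auto simp: bext_def bpre_nth le_less)
  show "\<forall>g'\<in>BAD. (\<forall>k<n. g' k = mbs k) \<longrightarrow> length (mbs n) \<le> length (g' n)"
    using g'(4) by (auto simp: bext_def bpre_nth)
qed

lemma mbs_bad:
  assumes "BAD \<noteq> {}" "i < j"
  shows "\<not> emb P (mbs i) (mbs j)"
proof -
  obtain g where g: "g \<in> BAD" "\<forall>k\<le>j. g k = mbs k" using mbs_props(1)[OF assms(1)] by blast
  then have gb: "\<not> emb P (g i) (g j)" using assms(2) unfolding BAD_def good_def by blast
  have "g i = mbs i" "g j = mbs j" using g(2) assms(2) by auto
  then show ?thesis using gb by simp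
qed

lemma higman: "wqo (emb P)"
proof (rule ccontr)
  assume "\<not> wqo (emb P)"
  then have B: "BAD \<noteq> {}" by (auto simp: wqo_def BAD_def)
  have ne: "mbs n \<noteq> []" for n
    using mbs_bad[OF B, of n "Suc n"] emb_nil[of P] by auto
  define a where "a n = hd (mbs n)" for n
  define t where "t n = tl (mbs n)" for n
  have at: "mbs n = a n # t n" for n using ne[of n] by (simp add: a_def t_def)
  obtain \<phi> :: "nat \<Rightarrow> nat" where \<phi>: "strict_mono \<phi>" "\<forall>i j. i < j \<longrightarrow> P (a (\<phi> i)) (a (\<phi> j))"
    using wqo_subseq[OF wP, of a] by auto
  have \<phi>ge: "\<phi> 0 \<le> \<phi> k" for k using \<phi>(1) by (simp add: strict_mono_less_eq)
  define g where "g k = (if k < \<phi> 0 then mbs k else t (\<phi> (k - \<phi> 0)))" for k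
  have "g \<in> BAD"
    unfolding BAD_def good_def
  proof (clarify)
    fix i j assume ij: "i < j" and e: "emb P (g i) (g j)"
    show False
    proof (cases "j < \<phi> 0")
      case True
      then show False using e ij mbs_bad[OF B ij] by (simp add: g_def)
    next
      case jF: False
      show False
      proof (cases "i < \<phi> 0")
        case True
        then have "emb P (mbs i) (t (\<phi> (j - \<phi> 0)))" using e jF by (simp add: g_def)
        then have "emb P (mbs i) (mbs (\<phi> (j - \<phi> 0)))" by (simp add: at emb_skip)
        moreover have "i < \<phi> (j - \<phi> 0)" using True \<phi>ge[of "j - \<phi> 0"] by simp
        ultimately show False using mbs_bad[OF B] by blast
      next
        case False
        then have "emb P (t (\<phi> (i - \<phi> 0))) (t (\<phi> (j - \<phi> 0)))" using e jF by (simp add: g_def)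
        moreover have "i - \<phi> 0 < j - \<phi> 0" using False ij by simp
        ultimately have "emb P (mbs (\<phi> (i - \<phi> 0))) (mbs (\<phi> (j - \<phi> 0)))"
          using \<phi>(2) by (simp add: at emb_match)
        moreover have "\<phi> (i - \<phi> 0) < \<phi> (j - \<phi> 0)"
          using \<open>i - \<phi> 0 < j - \<phi> 0\<close> \<phi>(1) by (simp add: strict_mono_less)
        ultimately show False using mbs_bad[OF B] by blast
      qed
    qed
  qed
  moreover have "\<forall>k<\<phi> 0. g k = mbs k" by (simp add: g_def)
  ultimately have L1: "length (mbs (\<phi> 0)) \<le> length (g (\<phi> 0))"
    using mbs_props(2)[OF B, of "\<phi> 0"] by blast
  have L2: "g (\<phi> 0) = t (\<phi> 0)" by (simp add: g_def)
  have L3: "length (mbs (\<phi> 0)) = Suc (length (t (\<phi> 0)))"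
    using at[of "\<phi> 0"] by (metis length_Cons)
  from L1 have "length (mbs (\<phi> 0)) \<le> length (t (\<phi> 0))" unfolding L2 .
  then show False unfolding L3 by simp
qed

end


lemma emb_idx:
  assumes "emb P xs ys"
  shows "\<exists>\<psi>::nat\<Rightarrow>nat. strict_mono \<psi> \<and> (\<forall>i<length xs. \<psi> i < length ys \<and> P (xs!i) (ys!(\<psi> i)))"
  using assms
proof (induction rule: emb.induct)
  case (emb_nil ys)
  then show ?case by (intro exI[of _ id]) (simp add: strict_mono_def)
next
  case (emb_skip xs ys y)
  then obtain \<psi> :: "nat\<Rightarrow>nat" where \<psi>: "strict_mono \<psi>" "\<forall>i<length xs. \<psi> i < length ys \<and> P (xs!i) (ys!(\<psi> i))" by blast
  show ?case using \<psi> by (intro exI[of _ "Suc \<circ> \<psi>"]) (auto simp: strict_mono_def)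
next
  case (emb_match x y xs ys)
  then obtain \<psi> :: "nat\<Rightarrow>nat" where \<psi>: "strict_mono \<psi>" "\<forall>i<length xs. \<psi> i < length ys \<and> P (xs!i) (ys!(\<psi> i))" by blast
  define \<psi>' where "\<psi>' i = (case i of 0 \<Rightarrow> 0 | Suc k \<Rightarrow> Suc (\<psi> k))" for i
  have "strict_mono \<psi>'"
    unfolding strict_mono_def
  proof (intro allI impI)
    fix a b :: nat assume "a < b"
    then show "\<psi>' a < \<psi>' b" using \<psi>(1)
      by (cases a; cases b) (auto simp: \<psi>'_def strict_mono_less)
  qed
  moreover have "\<forall>i<length (x # xs). \<psi>' i < length (y # ys) \<and> P ((x # xs)!i) ((y # ys)!(\<psi>' i))"
  proof (intro allI impI)
    fix i assume "i < length (x # xs)"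
    then show "\<psi>' i < length (y # ys) \<and> P ((x # xs)!i) ((y # ys)!(\<psi>' i))"
      using \<psi>(2) emb_match.hyps(1) by (cases i) (auto simp: \<psi>'_def)
  qed
  ultimately show ?case by blast
qed

definition hmap :: "(nat \<Rightarrow> nat) \<Rightarrow> nat \<Rightarrow> nat" where
  "hmap \<rho> c = 2 * \<rho> (c div 2) + c mod 2"

definition rmap :: "(nat \<Rightarrow> nat) \<Rightarrow> nat multiset \<Rightarrow> nat multiset" where
  "rmap \<rho> m = image_mset (hmap \<rho>) m"

lemma hmap_strict_mono:
  assumes "strict_mono \<rho>"
  shows "strict_mono (hmap \<rho>)"
  unfolding strict_mono_def
proof (intro allI impI)
  fix c d :: nat assume cd: "c < d"
  show "hmap \<rho> c < hmap \<rho> d"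
  proof (cases "c div 2 = d div 2")
    case True
    then have "c mod 2 < d mod 2" using cd by (metis div_mod_decomp add_less_cancel_left mult.commute)
    then show ?thesis using True by (simp add: hmap_def)
  next
    case False
    then have "c div 2 < d div 2" using cd by (meson div_le_mono le_less not_le)
    then have "\<rho> (c div 2) < \<rho> (d div 2)" using assms by (simp add: strict_mono_less)
    then show ?thesis by (simp add: hmap_def)
  qed
qed

lemma count_image_inj:
  assumes "inj h"
  shows "count (image_mset h M) (h c) = count M c"
proof -
  have "h -` {h c} \<inter> set_mset M = {c} \<inter> set_mset M" using assms by (auto dest: injD)
  then show ?thesis by (cases "c \<in># M") (auto simp: count_image_mset not_in_iff)
qed

lemma count_image_notin:
  assumes "y \<notin> range h"
  shows "count (image_mset h M) y = 0"
  using assms by (auto simp: count_image_mset)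

definition memb :: "nat multiset \<Rightarrow> nat multiset \<Rightarrow> bool" where
  "memb m m' \<longleftrightarrow> (\<exists>\<rho>. strict_mono \<rho> \<and> rmap \<rho> m \<subseteq># m')"

definition Dk :: "nat \<times> nat \<Rightarrow> nat \<times> nat \<Rightarrow> bool" where
  "Dk x y \<longleftrightarrow> fst x \<le> fst y \<and> snd x \<le> snd y"

definition word :: "nat multiset \<Rightarrow> (nat \<times> nat) list" where
  "word m = map (\<lambda>k. (count m (2*k), count m (2*k+1))) [0..<Suc (Max (insert 0 (set_mset m)))]"

lemma emb_word_memb:
  assumes "emb Dk (word m) (word m')"
  shows "memb m m'"
proof -
  obtain \<psi> :: "nat \<Rightarrow> nat" where \<psi>: "strict_mono \<psi>"
    "\<forall>i<length (word m). \<psi> i < length (word m') \<and> Dk (word m ! i) (word m' ! (\<psi> i))"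
    using emb_idx[OF assms] by blast
  have inj: "inj (hmap \<psi>)" using hmap_strict_mono[OF \<psi>(1)] strict_mono_imp_inj_on by blast
  have "count (rmap \<psi> m) y \<le> count m' y" for y
  proof (cases "y \<in> range (hmap \<psi>)")
    case False
    then show ?thesis by (simp add: rmap_def count_image_notin)
  next
    case True
    then obtain c where y: "y = hmap \<psi> c" by auto
    have cnt: "count (rmap \<psi> m) y = count m c" using inj by (simp add: rmap_def y count_image_inj)
    show ?thesis
    proof (cases "c \<in># m")
      case False
      then show ?thesis using cnt by (simp add: not_in_iff)
    next
      case True
      define k where "k = c div 2"
      have "c \<le> Max (insert 0 (set_mset m))" using True by simp
      then have kl: "k < length (word m)" by (simp add: word_def k_def)
      with \<psi>(2) have D: "\<psi> k < length (word m')" "Dk (word m ! k) (word m' ! (\<psi> k))" by auto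
      then have "count m (2*k) \<le> count m' (2 * \<psi> k)" "count m (2*k+1) \<le> count m' (2 * \<psi> k + 1)"
        using kl by (auto simp: word_def Dk_def simp del: upt_Suc)
      moreover have "c = 2*k + c mod 2" "y = 2 * \<psi> k + c mod 2" by (simp_all add: k_def y hmap_def)
      moreover have "c mod 2 = 0 \<or> c mod 2 = 1" by auto
      ultimately show ?thesis using cnt by (metis add.right_neutral)
    qed
  qed
  then show ?thesis unfolding memb_def using \<psi>(1) by (auto simp: subseteq_mset_def)
qed

lemma wqo_memb: "wqo memb"
  unfolding wqo_def good_def
proof
  fix x :: "nat \<Rightarrow> nat multiset"
  have wD: "wqo Dk" using wqo_prod[OF wqo_nat wqo_nat] by (simp add: Dk_def[abs_def])
  have "good (emb Dk) (word \<circ> x)" using higman[OF wD] by (simp add: wqo_def)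
  then obtain i j where "i < j" "emb Dk (word (x i)) (word (x j))" by (auto simp: good_def)
  then show "\<exists>i j. i < j \<and> memb (x i) (x j)" using emb_word_memb by blast
qed




type_synonym 'a cp = "nat multiset \<Rightarrow> 'a"

definition csupp :: "'a::zero cp \<Rightarrow> nat multiset set" where
  "csupp h = {m. h m \<noteq> 0}"

definition czero :: "'a::zero cp" where "czero = (\<lambda>_. 0)"
definition cadd :: "'a::plus cp \<Rightarrow> 'a cp \<Rightarrow> 'a cp" where "cadd p q = (\<lambda>m. p m + q m)"
definition csmult :: "'a::times \<Rightarrow> 'a cp \<Rightarrow> 'a cp" where "csmult c p = (\<lambda>m. c * p m)"
definition tvar :: "nat \<Rightarrow> 'a::zero cp \<Rightarrow> 'a cp" where
  "tvar x h = (\<lambda>m. if x \<in># m then h (m - {#x#}) else 0)"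
definition cren :: "(nat \<Rightarrow> nat) \<Rightarrow> 'a::comm_monoid_add cp \<Rightarrow> 'a cp" where
  "cren \<rho> h = (\<lambda>m. \<Sum>m'\<in>{m' \<in> csupp h. rmap \<rho> m' = m}. h m')"

inductive_set Gc :: "'a::field cp set \<Rightarrow> 'a cp set" for S where
  Gc_gen: "g \<in> S \<Longrightarrow> g \<in> Gc S"
| Gc_zero: "czero \<in> Gc S"
| Gc_add: "p \<in> Gc S \<Longrightarrow> q \<in> Gc S \<Longrightarrow> cadd p q \<in> Gc S"
| Gc_smult: "p \<in> Gc S \<Longrightarrow> csmult c p \<in> Gc S"
| Gc_tvar: "p \<in> Gc S \<Longrightarrow> tvar x p \<in> Gc S"
| Gc_ren: "p \<in> Gc S \<Longrightarrow> strict_mono \<rho> \<Longrightarrow> cren \<rho> p \<in> Gc S"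

lemma Gc_mono: "p \<in> Gc S \<Longrightarrow> S \<subseteq> T \<Longrightarrow> p \<in> Gc T"
  by (induction p rule: Gc.induct) (auto intro: Gc.intros)

lemma rmap_inj:
  assumes "strict_mono \<rho>"
  shows "inj (rmap \<rho>)"
proof (rule injI)
  fix m1 m2 assume e: "rmap \<rho> m1 = rmap \<rho> m2"
  have inj: "inj (hmap \<rho>)" using hmap_strict_mono[OF assms] strict_mono_imp_inj_on by blast
  show "m1 = m2"
  proof (rule multiset_eqI)
    fix c
    have "count m1 c = count (rmap \<rho> m1) (hmap \<rho> c)" using inj by (simp add: rmap_def count_image_inj)
    also have "\<dots> = count m2 c" using inj e by (simp add: rmap_def count_image_inj)
    finally show "count m1 c = count m2 c" .
  qed
qed

lemma rmap_mono:
  assumes "strict_mono \<rho>"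
  shows "mono (rmap \<rho>)"
proof (rule monoI)
  fix M N :: "nat multiset" assume le: "M \<le> N"
  have sm: "strict_mono (hmap \<rho>)" using hmap_strict_mono[OF assms] .
  then have inj: "inj (hmap \<rho>)" using strict_mono_imp_inj_on by blast
  show "rmap \<rho> M \<le> rmap \<rho> N"
    unfolding less_eq_multiset\<^sub>H\<^sub>O
  proof (intro allI impI)
    fix y assume lt: "count (rmap \<rho> N) y < count (rmap \<rho> M) y"
    show "\<exists>x. y < x \<and> count (rmap \<rho> M) x < count (rmap \<rho> N) x"
    proof (cases "y \<in> range (hmap \<rho>)")
      case False
      then show ?thesis using lt by (simp add: rmap_def count_image_notin)
    next
      case True
      then obtain c where y: "y = hmap \<rho> c" by auto
      have "count N c < count M c" using lt inj by (simp add: y rmap_def count_image_inj)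
      then obtain x where "c < x" "count M x < count N x" using le unfolding less_eq_multiset\<^sub>H\<^sub>O by blast
      then show ?thesis using inj sm
        by (intro exI[of _ "hmap \<rho> x"]) (simp add: y rmap_def count_image_inj strict_mono_less)
    qed
  qed
qed

lemma csupp_tvar: "csupp (tvar x h) = add_mset x ` csupp h"
proof (intro set_eqI iffI)
  fix m assume "m \<in> csupp (tvar x h)"
  then have "x \<in># m" "h (m - {#x#}) \<noteq> 0" by (auto simp: csupp_def tvar_def split: if_splits)
  then show "m \<in> add_mset x ` csupp h"
    by (intro image_eqI[of _ _ "m - {#x#}"]) (auto simp: csupp_def)
next
  fix m assume "m \<in> add_mset x ` csupp h"
  then show "m \<in> csupp (tvar x h)" by (auto simp: csupp_def tvar_def)
qed

lemma cren_rmap: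
  assumes "strict_mono \<rho>"
  shows "cren \<rho> h (rmap \<rho> m) = h m"
proof -
  have eq: "{m' \<in> csupp h. rmap \<rho> m' = rmap \<rho> m} = (if h m = 0 then {} else {m})"
  proof -
    have "rmap \<rho> m' = rmap \<rho> m \<longleftrightarrow> m' = m" for m'
      using rmap_inj[OF assms] unfolding inj_def by blast
    then show ?thesis by (auto simp: csupp_def)
  qed
  show ?thesis unfolding cren_def eq by (cases "h m = 0") simp_all
qed

lemma csupp_cren:
  assumes "strict_mono \<rho>"
  shows "csupp (cren \<rho> h) = rmap \<rho> ` csupp h"
proof (intro set_eqI iffI)
  fix m assume m: "m \<in> csupp (cren \<rho> h)"
  show "m \<in> rmap \<rho> ` csupp h"
  proof (rule ccontr)
    assume "m \<notin> rmap \<rho> ` csupp h"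
    then have "{m' \<in> csupp h. rmap \<rho> m' = m} = {}" by blast
    then have "cren \<rho> h m = 0" unfolding cren_def by (simp only: sum.empty)
    then show False using m unfolding csupp_def by simp
  qed
next
  fix m assume "m \<in> rmap \<rho> ` csupp h"
  then obtain m0 where "m = rmap \<rho> m0" "m0 \<in> csupp h" by blast
  then show "m \<in> csupp (cren \<rho> h)" using cren_rmap[OF assms, of h m0] unfolding csupp_def by simp
qed

lemma Gc_finite:
  assumes "\<forall>g\<in>S. finite (csupp g)" "p \<in> Gc S"
  shows "finite (csupp p)"
  using assms(2)
proof (induction p rule: Gc.induct)
  case (Gc_gen g) then show ?case using assms(1) by auto
next
  case Gc_zero then show ?case by (simp add: csupp_def czero_def)
next
  case (Gc_add p q)
  have "csupp (cadd p q) \<subseteq> csupp p \<union> csupp q" by (auto simp: csupp_def cadd_def)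
  then show ?case using Gc_add finite_subset by blast
next
  case (Gc_smult p c)
  have "csupp (csmult c p) \<subseteq> csupp p" by (auto simp: csupp_def csmult_def)
  then show ?case using Gc_smult finite_subset by blast
next
  case (Gc_tvar p x) then show ?case by (simp add: csupp_tvar)
next
  case (Gc_ren p \<rho>) then show ?case by (simp add: csupp_cren)
qed

definition lm :: "'a::zero cp \<Rightarrow> nat multiset" where
  "lm h = Max (csupp h)"

definition LMs :: "'a::zero cp set \<Rightarrow> nat multiset set" where
  "LMs G = {lm h | h. h \<in> G \<and> csupp h \<noteq> {}}"

lemma LMsE:
  assumes "x \<in> LMs G"
  obtains h where "h \<in> G" "csupp h \<noteq> {}" "lm h = x"
  using assms unfolding LMs_def by blast

lemma LMsI:
  assumes "h \<in> G" "csupp h \<noteq> {}"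
  shows "lm h \<in> LMs G"
  using assms unfolding LMs_def by blast

lemma LMs_mono: "G \<subseteq> H \<Longrightarrow> x \<in> LMs G \<Longrightarrow> x \<in> LMs H"
  by (erule LMsE) (metis LMsI subsetD)

lemma lm_tvar:
  assumes "finite (csupp h)" "csupp h \<noteq> {}"
  shows "lm (tvar x h) = add_mset x (lm h)" "csupp (tvar x h) \<noteq> {}"
proof -
  have "mono (add_mset x :: nat multiset \<Rightarrow> _)"
    by (rule monoI) (metis add_mset_add_single add_left_mono add.commute)
  then show "lm (tvar x h) = add_mset x (lm h)"
    using assms by (simp add: lm_def csupp_tvar mono_Max_commute)
  show "csupp (tvar x h) \<noteq> {}" using assms by (simp add: csupp_tvar)
qed

lemma lm_cren:
  assumes "strict_mono \<rho>" "finite (csupp h)" "csupp h \<noteq> {}"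
  shows "lm (cren \<rho> h) = rmap \<rho> (lm h)" "csupp (cren \<rho> h) \<noteq> {}"
  using assms by (simp_all add: lm_def csupp_cren mono_Max_commute rmap_mono)

lemma LMs_up:
  assumes fin: "\<forall>g\<in>S. finite (csupp g)" and x: "x \<in> LMs (Gc S)"
    and sm: "strict_mono \<rho>" and sub: "rmap \<rho> x \<subseteq># y"
  shows "y \<in> LMs (Gc S)"
proof -
  obtain h where h: "h \<in> Gc S" "csupp h \<noteq> {}" "lm h = x" using x by (auto simp: LMs_def)
  have fh: "finite (csupp h)" using Gc_finite[OF fin h(1)] .
  define h1 where "h1 = cren \<rho> h"
  have h1: "h1 \<in> Gc S" "csupp h1 \<noteq> {}" "lm h1 = rmap \<rho> x" "finite (csupp h1)"
    using h fh sm lm_cren[OF sm fh h(2)] Gc_finite[OF fin] by (auto simp: h1_def intro: Gc.intros)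
  have "\<forall>z. lm h1 = z \<longrightarrow> z + D \<in> LMs (Gc S)" for D
  proof (induction D)
    case empty
    show ?case unfolding LMs_def using h1 by auto
  next
    case (add a D)
    show ?case
    proof (intro allI impI)
      fix z assume "lm h1 = z"
      then have "z + D \<in> LMs (Gc S)" using add by blast
      then obtain k where k: "k \<in> Gc S" "csupp k \<noteq> {}" "lm k = z + D" by (rule LMsE)
      have fk: "finite (csupp k)" using Gc_finite[OF fin k(1)] .
      have "lm (tvar a k) = add_mset a (z + D)" "csupp (tvar a k) \<noteq> {}"
        using lm_tvar[OF fk k(2), of a] k(3) by simp_all
      moreover have "tvar a k \<in> Gc S" using k by (auto intro: Gc.intros)
      ultimately show "z + add_mset a D \<in> LMs (Gc S)" using LMsI[of "tvar a k" "Gc S"] by simp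
    qed
  qed
  then have "rmap \<rho> x + (y - rmap \<rho> x) \<in> LMs (Gc S)" using h1 by blast
  then show ?thesis using sub by (simp add: subset_mset.add_diff_inverse)
qed

lemma Gc_reduce:
  assumes fin: "\<forall>g\<in>T. finite (csupp g)" and ST: "S \<subseteq> T"
    and L: "LMs (Gc T) \<subseteq> LMs (Gc S)"
  shows "Gc T \<subseteq> Gc S"
proof -
  have finS: "\<forall>g\<in>S. finite (csupp g)" using fin ST by auto
  have main: "\<forall>h\<in>Gc T. csupp h \<noteq> {} \<longrightarrow> lm h = M \<longrightarrow> h \<in> Gc S" for M
  proof (induction M rule: less_induct)
    case (less M)
    show ?case
    proof (intro ballI impI)
      fix h assume h: "h \<in> Gc T" "csupp h \<noteq> {}" "lm h = M"
      have fh: "finite (csupp h)" using Gc_finite[OF fin h(1)] .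
      have "M \<in> LMs (Gc S)" using L LMsI[OF h(1,2)] h(3) by blast
      then obtain h1 where h1: "h1 \<in> Gc S" "csupp h1 \<noteq> {}" "lm h1 = M" by (rule LMsE)
      have fh1: "finite (csupp h1)" using Gc_finite[OF finS h1(1)] .
      have h1T: "h1 \<in> Gc T" using Gc_mono[OF h1(1) ST] .
      have "M \<in> csupp h" using Max_in[OF fh h(2)] h(3) unfolding lm_def by simp
      then have hM: "h M \<noteq> 0" unfolding csupp_def by simp
      have "M \<in> csupp h1" using Max_in[OF fh1 h1(2)] h1(3) unfolding lm_def by simp
      then have h1M: "h1 M \<noteq> 0" unfolding csupp_def by simp
      define c where "c = h M / h1 M"
      define h' where "h' = cadd h (csmult (- c) h1)"
      have h'T: "h' \<in> Gc T" using h h1T by (auto simp: h'_def intro: Gc.intros)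
      have eq: "h = cadd h' (csmult c h1)" by (auto simp: h'_def cadd_def csmult_def)
      have h'S: "h' \<in> Gc S"
      proof (cases "csupp h' = {}")
        case True
        then have "h' = czero" by (auto simp: csupp_def czero_def)
        then show ?thesis by (simp add: Gc.intros)
      next
        case False
        have sub: "csupp h' \<subseteq> csupp h \<union> csupp h1" by (auto simp: h'_def csupp_def cadd_def csmult_def)
        have fh': "finite (csupp h')" using fh fh1 sub finite_subset by blast
        have "h' M = 0" using h1M by (simp add: h'_def cadd_def csmult_def c_def)
        moreover have "m \<le> M" if "m \<in> csupp h'" for m
        proof -
          have "m \<in> csupp h \<or> m \<in> csupp h1" using sub that by auto
          then show ?thesis
          proof
            assume "m \<in> csupp h" then show ?thesis using Max_ge[OF fh] h(3) unfolding lm_def by blast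
          next
            assume "m \<in> csupp h1" then show ?thesis using Max_ge[OF fh1] h1(3) unfolding lm_def by blast
          qed
        qed
        ultimately have "m < M" if "m \<in> csupp h'" for m
        proof -
          have "m \<noteq> M" using that \<open>h' M = 0\<close> unfolding csupp_def by auto
          then show ?thesis using \<open>m \<in> csupp h' \<Longrightarrow> m \<le> M\<close>[OF that] by simp
        qed
        then have "lm h' < M" using Max_in[OF fh' False] unfolding lm_def by blast
        then show ?thesis using less.IH h'T False by blast
      qed
      show "h \<in> Gc S" using h'S h1(1) eq by (metis Gc.intros(3,4))
    qed
  qed
  show ?thesis
  proof
    fix h assume "h \<in> Gc T"
    then show "h \<in> Gc S"
    proof (cases "csupp h = {}")
      case True
      then have "h = czero" by (auto simp: csupp_def czero_def)
      then show ?thesis by (simp add: Gc.intros)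
    next
      case False
      then show ?thesis using main[of "lm h"] \<open>h \<in> Gc T\<close> by blast
    qed
  qed
qed

theorem poly_chain:
  fixes g :: "nat \<Rightarrow> 'a::field cp"
  assumes fin: "\<forall>i. finite (csupp (g i))"
  shows "\<not> (\<forall>i\<ge>2. g i \<notin> Gc {g j | j. 1 \<le> j \<and> j < i})"
proof
  assume bad: "\<forall>i\<ge>2. g i \<notin> Gc {g j | j. 1 \<le> j \<and> j < i}"
  define Gs where "Gs i = {g j | j. 1 \<le> j \<and> j < i}" for i
  have finG: "\<forall>x\<in>Gs i. finite (csupp x)" for i using fin by (auto simp: Gs_def)
  have mono: "i \<le> k \<Longrightarrow> Gs i \<subseteq> Gs k" for i k by (auto simp: Gs_def)
  have "\<exists>x. x \<in> LMs (Gc (Gs (Suc i))) \<and> x \<notin> LMs (Gc (Gs i))" if "i \<ge> 2" for i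
  proof (rule ccontr)
    assume "\<nexists>x. x \<in> LMs (Gc (Gs (Suc i))) \<and> x \<notin> LMs (Gc (Gs i))"
    then have "LMs (Gc (Gs (Suc i))) \<subseteq> LMs (Gc (Gs i))" by blast
    then have "Gc (Gs (Suc i)) \<subseteq> Gc (Gs i)" using Gc_reduce[OF finG mono] by auto
    moreover have "g i \<in> Gc (Gs (Suc i))" using that by (auto simp: Gs_def intro!: Gc_gen)
    ultimately show False using bad that by (auto simp: Gs_def)
  qed
  then obtain x where x: "\<And>i. i \<ge> 2 \<Longrightarrow> x i \<in> LMs (Gc (Gs (Suc i))) \<and> x i \<notin> LMs (Gc (Gs i))"
    by metis
  have "good memb (\<lambda>n. x (n + 2))" using wqo_memb by (simp add: wqo_def)
  then obtain n n' where nn: "n < n'" "memb (x (n + 2)) (x (n' + 2))" by (auto simp: good_def)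
  then obtain \<rho> where \<rho>: "strict_mono \<rho>" "rmap \<rho> (x (n+2)) \<subseteq># x (n'+2)" by (auto simp: memb_def)
  have "Gc (Gs (Suc (n+2))) \<subseteq> Gc (Gs (n'+2))" using nn(1) mono[of "Suc (n+2)" "n'+2"]
    by (auto intro: Gc_mono)
  moreover have "(2::nat) \<le> n+2" by simp
  then have "x (n+2) \<in> LMs (Gc (Gs (Suc (n+2))))" using x by blast
  ultimately have "x (n+2) \<in> LMs (Gc (Gs (n'+2)))" by (rule LMs_mono)
  then have "x (n'+2) \<in> LMs (Gc (Gs (n'+2)))" using LMs_up[OF finG _ \<rho>(1,2)] by blast
  moreover have "(2::nat) \<le> n'+2" by simp
  then have "x (n'+2) \<notin> LMs (Gc (Gs (n'+2)))" using x by blast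
  ultimately show False by contradiction
qed




lemma supp_fa_var: "supp (fa_var x :: 'a::zero_neq_one fa) = {[x]}"
  by (auto simp: supp_def fa_var_def)

lemma supp_fa_one: "supp (fa_one :: 'a::zero_neq_one fa) = {[]}"
  by (auto simp: supp_def fa_one_def)

lemma supp_fa_mul:
  "supp (fa_mul p q) \<subseteq> (\<lambda>(u, v). u @ v) ` (supp p \<times> supp q)"
proof
  fix w assume "w \<in> supp (fa_mul p q)"
  then have "(\<Sum>i\<in>{0..length w}. p (take i w) * q (drop i w)) \<noteq> 0"
    by (simp add: supp_def fa_mul_def)
  then obtain i where "p (take i w) * q (drop i w) \<noteq> 0"
    by (metis (no_types, lifting) sum.neutral)
  then have "take i w \<in> supp p" "drop i w \<in> supp q" by (auto simp: supp_def)
  then show "w \<in> (\<lambda>(u, v). u @ v) ` (supp p \<times> supp q)"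
    by (intro image_eqI[of _ _ "(take i w, drop i w)"]) auto
qed

lemma fin_fa_mul: "finite (supp p) \<Longrightarrow> finite (supp q) \<Longrightarrow> finite (supp (fa_mul p q))"
  by (rule finite_subset[OF supp_fa_mul]) auto

lemma supp_add: "supp (fa_add p q) \<subseteq> supp p \<union> supp (q :: 'a::monoid_add fa)"
  by (auto simp: supp_def fa_add_def)

lemma supp_smult: "supp (fa_smult c p) \<subseteq> supp (p :: 'a::mult_zero fa)"
  by (auto simp: supp_def fa_smult_def)

lemma supp_bracket: "supp (bracket p q) \<subseteq> supp (fa_mul p q) \<union> supp (fa_mul q p)"
  by (auto simp: supp_def bracket_def)

lemma fin_bracket: "finite (supp p) \<Longrightarrow> finite (supp q) \<Longrightarrow> finite (supp (bracket p q))"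
  by (rule finite_subset[OF supp_bracket]) (auto intro: fin_fa_mul)

lemma fin_add: "finite (supp (p :: 'a::monoid_add fa)) \<Longrightarrow> finite (supp q) \<Longrightarrow> finite (supp (fa_add p q))"
  by (rule finite_subset[OF supp_add]) auto

lemma fin_smult: "finite (supp (p :: 'a::mult_zero fa)) \<Longrightarrow> finite (supp (fa_smult c p))"
  by (rule finite_subset[OF supp_smult]) auto

lemma lie_fin: "p \<in> lie \<Longrightarrow> finite (supp (p :: 'a::comm_ring_1 fa))"
proof (induction rule: lie.induct)
  case (lie_var x) then show ?case by (cases "(1::'a) = 0") (auto simp: supp_def fa_var_def)
next
  case lie_zero then show ?case by (simp add: supp_def fa_zero_def)
qed (auto intro: fin_add fin_smult fin_bracket)

section \<open>Matrices\<close>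

lemma sum3: "(\<Sum>k<(3::nat). f k) = f 0 + f 1 + (f 2 :: 'a::comm_monoid_add)"
  by (simp add: eval_nat_numeral add.assoc)

lemma mmul_assoc: "mmul (mmul A B) C = mmul A (mmul B C)"
  by (rule ext)+ (simp add: mmul_def sum3 algebra_simps)

lemma mmul_mone_left: "i < 3 \<Longrightarrow> mmul mone B i j = B i j"
  by (auto simp: mmul_def mone_def sum3 eval_nat_numeral less_Suc_eq)

lemma mmul_mone_right: "j < 3 \<Longrightarrow> mmul A mone i j = A i j"
  by (auto simp: mmul_def mone_def sum3 eval_nat_numeral less_Suc_eq)

lemma mmul_cong:
  assumes "\<And>k. k < 3 \<Longrightarrow> A i k = A' i k" "\<And>k. k < 3 \<Longrightarrow> B k j = B' k j"
  shows "mmul A B i j = mmul A' B' i j"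
  using assms by (simp add: mmul_def)

lemma mprod_append:
  "i < 3 \<Longrightarrow> j < 3 \<Longrightarrow> mprod (u @ v) i j = mmul (mprod u) (mprod v) i j"
proof (induction u arbitrary: i)
  case Nil then show ?case by (simp add: mprod_def mmul_mone_left)
next
  case (Cons x u)
  have "mprod ((x # u) @ v) i j = mmul x (mprod (u @ v)) i j" by (simp add: mprod_def)
  also have "\<dots> = mmul x (mmul (mprod u) (mprod v)) i j"
    using Cons by (intro mmul_cong) auto
  also have "\<dots> = mmul (mmul x (mprod u)) (mprod v) i j" by (simp add: mmul_assoc)
  finally show ?case by (simp add: mprod_def)
qed

section \<open>Evaluation\<close>

lemma evalM_superset:
  assumes "finite WW" "supp p \<subseteq> WW"
  shows "evalM \<phi> p i j = (\<Sum>w\<in>WW. p w * mprod (map \<phi> w) i j)"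
  unfolding evalM_def using assms
  by (intro sum.mono_neutral_left) (auto simp: supp_def)

lemma evalM_add:
  assumes "finite (supp p)" "finite (supp q)"
  shows "evalM \<phi> (fa_add p q) i j = evalM \<phi> p i j + evalM \<phi> q i j"
proof -
  let ?WW = "supp p \<union> supp q"
  have "evalM \<phi> (fa_add p q) i j = (\<Sum>w\<in>?WW. fa_add p q w * mprod (map \<phi> w) i j)"
    using assms supp_add by (intro evalM_superset) auto
  also have "\<dots> = (\<Sum>w\<in>?WW. p w * mprod (map \<phi> w) i j) + (\<Sum>w\<in>?WW. q w * mprod (map \<phi> w) i j)"
    by (simp add: fa_add_def distrib_right sum.distrib)
  also have "\<dots> = evalM \<phi> p i j + evalM \<phi> q i j"
    using evalM_superset[of ?WW p \<phi> i j] evalM_superset[of ?WW q \<phi> i j] assms by simp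
  finally show ?thesis .
qed

lemma evalM_smult:
  assumes "finite (supp p)"
  shows "evalM \<phi> (fa_smult c p) i j = c * evalM \<phi> p i j"
proof -
  have "evalM \<phi> (fa_smult c p) i j = (\<Sum>w\<in>supp p. fa_smult c p w * mprod (map \<phi> w) i j)"
    using assms supp_smult by (intro evalM_superset) auto
  also have "\<dots> = c * evalM \<phi> p i j"
    by (simp add: fa_smult_def evalM_def sum_distrib_left mult.assoc)
  finally show ?thesis .
qed

lemma evalM_zero: "evalM \<phi> fa_zero i j = 0"
  by (simp add: evalM_def supp_def fa_zero_def)

lemma evalM_var: "j < 3 \<Longrightarrow> evalM \<phi> (fa_var x :: 'a::comm_ring_1 fa) i j = \<phi> x i j"
  by (cases "(1::'a) = 0") (auto simp: evalM_def supp_fa_var fa_var_def mprod_def mmul_mone_right supp_def)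

lemma evalM_one: "i < 3 \<Longrightarrow> j < 3 \<Longrightarrow> evalM \<phi> (fa_one :: 'a::comm_ring_1 fa) i j = mone i j"
  by (cases "(1::'a) = 0") (auto simp: evalM_def fa_one_def mprod_def supp_def mone_def)

lemma evalM_mul:
  fixes p q :: "'a::comm_ring_1 fa"
  assumes fp: "finite (supp p)" and fq: "finite (supp q)" and ij: "i < 3" "j < 3"
  shows "evalM \<phi> (fa_mul p q) i j = mmul (evalM \<phi> p) (evalM \<phi> q) i j"
proof -
  define M where "M w = mprod (map \<phi> w) i j" for w
  define A where "A = supp p \<times> supp q"
  define WW where "WW = (\<lambda>(u, v). u @ v) ` A"
  have fA: "finite A" using fp fq by (simp add: A_def)
  have fW: "finite WW" using fA by (simp add: WW_def)
  define T where "T = Sigma WW (\<lambda>w. {0..length w})"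
  have fT: "finite T" using fW by (simp add: T_def)
  define T' where "T' = {ws \<in> T. (take (snd ws) (fst ws), drop (snd ws) (fst ws)) \<in> A}"
  have "evalM \<phi> (fa_mul p q) i j = (\<Sum>w\<in>WW. fa_mul p q w * M w)"
    unfolding M_def using supp_fa_mul fW by (intro evalM_superset) (auto simp: WW_def A_def)
  also have "\<dots> = (\<Sum>w\<in>WW. \<Sum>s\<in>{0..length w}. p (take s w) * q (drop s w) * M w)"
    by (simp add: fa_mul_def sum_distrib_right)
  also have "\<dots> = (\<Sum>ws\<in>T. p (take (snd ws) (fst ws)) * q (drop (snd ws) (fst ws)) * M (fst ws))"
    unfolding T_def by (subst sum.Sigma) (auto simp: fW split_def)
  also have "\<dots> = (\<Sum>ws\<in>T'. p (take (snd ws) (fst ws)) * q (drop (snd ws) (fst ws)) * M (fst ws))"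
    using fT by (intro sum.mono_neutral_right) (auto simp: T'_def A_def supp_def)
  also have "\<dots> = (\<Sum>uv\<in>A. p (fst uv) * q (snd uv) * M (fst uv @ snd uv))"
    by (rule sum.reindex_bij_witness[of _ "\<lambda>uv. (fst uv @ snd uv, length (fst uv))"
        "\<lambda>ws. (take (snd ws) (fst ws), drop (snd ws) (fst ws))"])
      (auto simp: T'_def T_def WW_def min_def)
  also have "\<dots> = (\<Sum>(u,v)\<in>supp p \<times> supp q. p u * q v * (\<Sum>k<3. mprod (map \<phi> u) i k * mprod (map \<phi> v) k j))"
    unfolding A_def M_def
    by (intro sum.cong refl) (simp add: split_def mprod_append[OF ij] mmul_def)
  also have "\<dots> = (\<Sum>u\<in>supp p. \<Sum>v\<in>supp q. p u * q v * (\<Sum>k<3. mprod (map \<phi> u) i k * mprod (map \<phi> v) k j))"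
    by (rule sum.cartesian_product[symmetric])
  also have "\<dots> = (\<Sum>u\<in>supp p. \<Sum>v\<in>supp q. \<Sum>k<3. (p u * mprod (map \<phi> u) i k) * (q v * mprod (map \<phi> v) k j))"
    by (intro sum.cong refl) (simp add: sum_distrib_left mult_ac)
  also have "\<dots> = (\<Sum>u\<in>supp p. \<Sum>k<3. \<Sum>v\<in>supp q. (p u * mprod (map \<phi> u) i k) * (q v * mprod (map \<phi> v) k j))"
    by (intro sum.cong refl) (rule sum.swap)
  also have "\<dots> = (\<Sum>k<3. \<Sum>u\<in>supp p. \<Sum>v\<in>supp q. (p u * mprod (map \<phi> u) i k) * (q v * mprod (map \<phi> v) k j))"
    by (rule sum.swap)
  also have "\<dots> = mmul (evalM \<phi> p) (evalM \<phi> q) i j"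
    unfolding mmul_def evalM_def by (simp only: sum_product)
  finally show ?thesis .
qed




lemma bracket_alt: "bracket p q = fa_add (fa_mul p q) (fa_smult (-1) (fa_mul q p))"
  by (rule ext) (simp add: bracket_def fa_add_def fa_smult_def)

lemma evalM_bracket:
  fixes p q :: "'a::comm_ring_1 fa"
  assumes "finite (supp p)" "finite (supp q)" "i < 3" "j < 3"
  shows "evalM \<phi> (bracket p q) i j = mmul (evalM \<phi> p) (evalM \<phi> q) i j - mmul (evalM \<phi> q) (evalM \<phi> p) i j"
  using assms
  by (simp add: bracket_alt evalM_add evalM_smult fin_fa_mul fin_smult evalM_mul)

lemma fa_prod_fin:
  assumes "\<forall>x. finite (supp (\<sigma> x :: 'a::comm_ring_1 fa))"
  shows "finite (supp (fa_prod (map \<sigma> u)))"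
proof (induction u)
  case Nil then show ?case by (cases "(1::'a) = 0") (auto simp: fa_prod_def supp_def fa_one_def)
next
  case (Cons x u) then show ?case using assms by (simp add: fa_prod_def fin_fa_mul)
qed

lemma evalM_prod:
  assumes fin: "\<forall>x. finite (supp (\<sigma> x :: 'a::comm_ring_1 fa))"
  shows "i < 3 \<Longrightarrow> j < 3 \<Longrightarrow> evalM \<phi> (fa_prod (map \<sigma> u)) i j = mprod (map (\<lambda>x. evalM \<phi> (\<sigma> x)) u) i j"
proof (induction u arbitrary: i)
  case Nil then show ?case by (simp add: fa_prod_def mprod_def evalM_one)
next
  case (Cons x u)
  have "evalM \<phi> (fa_prod (map \<sigma> (x # u))) i j = mmul (evalM \<phi> (\<sigma> x)) (evalM \<phi> (fa_prod (map \<sigma> u))) i j"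
    using Cons.prems fin fa_prod_fin[OF fin, of u] by (simp add: fa_prod_def evalM_mul)
  also have "\<dots> = mmul (evalM \<phi> (\<sigma> x)) (mprod (map (\<lambda>x. evalM \<phi> (\<sigma> x)) u)) i j"
    using Cons by (intro mmul_cong) auto
  finally show ?case by (simp add: mprod_def)
qed

lemma evalM_subst:
  fixes p :: "'a::comm_ring_1 fa"
  assumes fp: "finite (supp p)" and fin: "\<forall>x. finite (supp (\<sigma> x))" and ij: "i < 3" "j < 3"
  shows "evalM \<phi> (subst \<sigma> p) i j = evalM (\<lambda>x. evalM \<phi> (\<sigma> x)) p i j"
proof -
  define F where "F u = fa_prod (map \<sigma> u)" for u
  have fF: "finite (supp (F u))" for u using fa_prod_fin[OF fin] by (simp add: F_def)
  define WS where "WS = (\<Union>u\<in>supp p. supp (F u))"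
  have fWS: "finite WS" using fp fF by (simp add: WS_def)
  have sub: "supp (subst \<sigma> p) \<subseteq> WS"
  proof
    fix w assume "w \<in> supp (subst \<sigma> p)"
    then have "(\<Sum>u\<in>supp p. p u * F u w) \<noteq> 0" by (simp add: supp_def subst_def F_def)
    then obtain u where "u \<in> supp p" "p u * F u w \<noteq> 0" by (metis (no_types, lifting) sum.neutral)
    then show "w \<in> WS" by (auto simp: WS_def supp_def)
  qed
  define M where "M w = mprod (map \<phi> w) i j" for w
  have "evalM \<phi> (subst \<sigma> p) i j = (\<Sum>w\<in>WS. subst \<sigma> p w * M w)"
    unfolding M_def using fWS sub by (rule evalM_superset)
  also have "\<dots> = (\<Sum>w\<in>WS. \<Sum>u\<in>supp p. p u * (F u w * M w))"
    by (simp add: subst_def F_def sum_distrib_right mult.assoc)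
  also have "\<dots> = (\<Sum>u\<in>supp p. p u * (\<Sum>w\<in>WS. F u w * M w))"
    by (subst sum.swap) (simp add: sum_distrib_left)
  also have "\<dots> = (\<Sum>u\<in>supp p. p u * evalM \<phi> (F u) i j)"
  proof (intro sum.cong refl)
    fix u assume "u \<in> supp p"
    then have "supp (F u) \<subseteq> WS" by (auto simp: WS_def)
    then show "p u * (\<Sum>w\<in>WS. F u w * M w) = p u * evalM \<phi> (F u) i j"
      unfolding M_def using evalM_superset[OF fWS, of "F u" \<phi> i j] by simp
  qed
  also have "\<dots> = (\<Sum>u\<in>supp p. p u * mprod (map (\<lambda>x. evalM \<phi> (\<sigma> x)) u) i j)"
    unfolding F_def using evalM_prod[OF fin ij] by simp
  also have "\<dots> = evalM (\<lambda>x. evalM \<phi> (\<sigma> x)) p i j"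
    by (simp add: evalM_def)
  finally show ?thesis .
qed

lemma evalM_cong:
  assumes "\<And>x a b. a < 3 \<Longrightarrow> b < 3 \<Longrightarrow> \<phi> x a b = \<psi> x a b" "i < 3" "j < 3"
  shows "evalM \<phi> p i j = evalM \<psi> p i j"
proof -
  have "mprod (map \<phi> w) a b = mprod (map \<psi> w) a b" if "a < 3" "b < 3" for w a b
    using that
  proof (induction w arbitrary: a)
    case Nil then show ?case by (simp add: mprod_def)
  next
    case (Cons x w)
    then show ?case unfolding mprod_def by (simp add: mmul_def assms(1)[symmetric])
  qed
  then show ?thesis using assms by (simp add: evalM_def)
qed

lemma wdeg_single: "wdeg [x] = vdeg x"
proof -
  have "vdeg x < 3" by (cases x) auto
  then show ?thesis by (simp add: wdeg_def)
qed

lemma hom_var: "homogeneous_of (vdeg x) (fa_var x :: 'a::comm_ring_1 fa)"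
  by (auto simp: homogeneous_of_def fa_var_def wdeg_single split: if_splits)

lemma supp_mul_vars: "supp (fa_mul (fa_var x) (fa_var y) :: 'a::comm_ring_1 fa) \<subseteq> {[x, y]}"
proof -
  have "supp (fa_mul (fa_var x) (fa_var y) :: 'a fa) \<subseteq> (\<lambda>(u, v). u @ v) ` (supp (fa_var x :: 'a fa) \<times> supp (fa_var y :: 'a fa))"
    by (rule supp_fa_mul)
  also have "\<dots> \<subseteq> {[x, y]}" by (auto simp: supp_def fa_var_def split: if_splits)
  finally show ?thesis .
qed

lemma hom_bracket_ZY: "homogeneous_of 1 (bracket (fa_var (Z a)) (fa_var (Y k)) :: 'a::comm_ring_1 fa)"
proof -
  have "supp (bracket (fa_var (Z a)) (fa_var (Y k)) :: 'a fa) \<subseteq> {[Z a, Y k], [Y k, Z a]}"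
    using supp_bracket[of "fa_var (Z a) :: 'a fa" "fa_var (Y k)"] supp_mul_vars[of "Z a" "Y k", where 'a='a]
      supp_mul_vars[of "Y k" "Z a", where 'a='a] by blast
  then show ?thesis unfolding homogeneous_of_def by (auto simp: supp_def wdeg_def)
qed

definition sigZ :: "nat \<Rightarrow> var \<Rightarrow> 'a::comm_ring_1 fa" where
  "sigZ k x = (if x = Z 1 then bracket (fa_var (Z 1)) (fa_var (Y k)) else fa_var x)"

definition sigR :: "(nat \<Rightarrow> nat) \<Rightarrow> var \<Rightarrow> 'a::comm_ring_1 fa" where
  "sigR \<rho> x = (case x of Y i \<Rightarrow> fa_var (Y (\<rho> i)) | _ \<Rightarrow> fa_var x)"

lemma graded_sigZ: "graded_endo (sigZ k :: var \<Rightarrow> 'a::comm_ring_1 fa)"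
  unfolding graded_endo_def sigZ_def
  using hom_bracket_ZY[of 1 k, where 'a='a] hom_var[where 'a='a]
  by (auto intro: lie.intros)

lemma graded_sigR: "graded_endo (sigR \<rho> :: var \<Rightarrow> 'a::comm_ring_1 fa)"
  unfolding graded_endo_def
proof
  fix x show "sigR \<rho> x \<in> (lie :: 'a fa set) \<and> homogeneous_of (vdeg x) (sigR \<rho> x :: 'a fa)"
  proof (cases x)
    case (Y i) then show ?thesis using hom_var[of "Y (\<rho> i)", where 'a='a] by (simp add: sigR_def lie.intros)
  next
    case (Z i) then show ?thesis using hom_var[of "Z i", where 'a='a] by (simp add: sigR_def lie.intros)
  next
    case (W i) then show ?thesis using hom_var[of "W i", where 'a='a] by (simp add: sigR_def lie.intros)
  qed
qed

lemma fin_sigZ: "finite (supp (sigZ k x :: 'a::comm_ring_1 fa))"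
  using graded_sigZ[where 'a='a] lie_fin by (auto simp: graded_endo_def)

lemma fin_sigR: "finite (supp (sigR \<rho> x :: 'a::comm_ring_1 fa))"
  using graded_sigR[where 'a='a] lie_fin by (auto simp: graded_endo_def)




definition peval :: "(nat \<Rightarrow> 'a::comm_ring_1) \<Rightarrow> 'a cp \<Rightarrow> 'a" where
  "peval \<xi> h = (\<Sum>m\<in>csupp h. h m * prod_mset (image_mset \<xi> m))"

lemma peval_superset:
  assumes "finite A" "csupp h \<subseteq> A"
  shows "peval \<xi> h = (\<Sum>m\<in>A. h m * prod_mset (image_mset \<xi> m))"
  unfolding peval_def using assms by (intro sum.mono_neutral_left) (auto simp: csupp_def)

lemma peval_czero: "peval \<xi> czero = 0"
  by (simp add: peval_def czero_def csupp_def)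

lemma peval_cadd:
  assumes "finite (csupp p)" "finite (csupp q)"
  shows "peval \<xi> (cadd p q) = peval \<xi> p + peval \<xi> q"
proof -
  let ?A = "csupp p \<union> csupp q"
  have s: "csupp (cadd p q) \<subseteq> ?A" by (auto simp: csupp_def cadd_def)
  have "peval \<xi> (cadd p q) = (\<Sum>m\<in>?A. cadd p q m * prod_mset (image_mset \<xi> m))"
    using assms s by (intro peval_superset) auto
  also have "\<dots> = (\<Sum>m\<in>?A. p m * prod_mset (image_mset \<xi> m)) + (\<Sum>m\<in>?A. q m * prod_mset (image_mset \<xi> m))"
    by (simp add: cadd_def distrib_right sum.distrib)
  also have "\<dots> = peval \<xi> p + peval \<xi> q"
    using peval_superset[of ?A p \<xi>] peval_superset[of ?A q \<xi>] assms by simp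
  finally show ?thesis .
qed

lemma peval_csmult:
  assumes "finite (csupp p)"
  shows "peval \<xi> (csmult c p) = c * peval \<xi> p"
proof -
  have s: "csupp (csmult c p) \<subseteq> csupp p" by (auto simp: csupp_def csmult_def)
  have "peval \<xi> (csmult c p) = (\<Sum>m\<in>csupp p. csmult c p m * prod_mset (image_mset \<xi> m))"
    using assms s by (intro peval_superset) auto
  then show ?thesis by (simp add: csmult_def peval_def sum_distrib_left mult.assoc)
qed

lemma peval_tvar:
  shows "peval \<xi> (tvar x h) = \<xi> x * peval \<xi> h"
proof -
  have "peval \<xi> (tvar x h) = (\<Sum>m\<in>add_mset x ` csupp h. tvar x h m * prod_mset (image_mset \<xi> m))"
    by (simp add: peval_def csupp_tvar)
  also have "\<dots> = (\<Sum>m\<in>csupp h. tvar x h (add_mset x m) * prod_mset (image_mset \<xi> (add_mset x m)))"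
    by (subst sum.reindex) (simp_all add: inj_on_def)
  also have "\<dots> = (\<Sum>m\<in>csupp h. \<xi> x * (h m * prod_mset (image_mset \<xi> m)))"
    by (simp add: tvar_def mult_ac)
  finally show ?thesis by (simp add: peval_def sum_distrib_left)
qed

lemma peval_cren:
  assumes "strict_mono \<rho>"
  shows "peval \<xi> (cren \<rho> h) = peval (\<xi> \<circ> hmap \<rho>) h"
proof -
  have "peval \<xi> (cren \<rho> h) = (\<Sum>m\<in>rmap \<rho> ` csupp h. cren \<rho> h m * prod_mset (image_mset \<xi> m))"
    by (simp add: peval_def csupp_cren[OF assms])
  also have "\<dots> = (\<Sum>m\<in>csupp h. cren \<rho> h (rmap \<rho> m) * prod_mset (image_mset \<xi> (rmap \<rho> m)))"
    using rmap_inj[OF assms] by (subst sum.reindex) (simp_all add: inj_on_def inj_def)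
  also have "\<dots> = peval (\<xi> \<circ> hmap \<rho>) h"
    using cren_rmap[OF assms, of h] by (simp add: peval_def rmap_def image_mset.compositionality)
  finally show ?thesis .
qed

section \<open>The evaluation formula\<close>

definition uu :: "(var \<Rightarrow> 'a::comm_ring_1 mat) \<Rightarrow> nat \<Rightarrow> 'a" where
  "uu \<phi> k = \<phi> (Y k) 1 1 - \<phi> (Y k) 0 0"
definition vv :: "(var \<Rightarrow> 'a::comm_ring_1 mat) \<Rightarrow> nat \<Rightarrow> 'a" where
  "vv \<phi> k = \<phi> (Y k) 2 2 - \<phi> (Y k) 1 1"
definition xu :: "(var \<Rightarrow> 'a::comm_ring_1 mat) \<Rightarrow> nat \<Rightarrow> 'a" where
  "xu \<phi> c = (if even c then uu \<phi> (c div 2) else uu \<phi> (c div 2) + vv \<phi> (c div 2))"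
definition xv :: "(var \<Rightarrow> 'a::comm_ring_1 mat) \<Rightarrow> nat \<Rightarrow> 'a" where
  "xv \<phi> c = (if even c then vv \<phi> (c div 2) else uu \<phi> (c div 2) + vv \<phi> (c div 2))"

definition Fval :: "(var \<Rightarrow> 'a::comm_ring_1 mat) \<Rightarrow> 'a cp \<Rightarrow> 'a" where
  "Fval \<phi> h = \<phi> (Z 1) 0 1 * \<phi> (Z 2) 1 2 * peval (xu \<phi>) h - \<phi> (Z 1) 1 2 * \<phi> (Z 2) 0 1 * peval (xv \<phi>) h"

definition repr :: "'a::comm_ring_1 fa \<Rightarrow> 'a cp \<Rightarrow> bool" where
  "repr L h \<longleftrightarrow> finite (supp L) \<and> finite (csupp h) \<and>
     (\<forall>\<phi>. graded_UT3_subst \<phi> \<longrightarrow> (\<forall>i<3. \<forall>j<3. evalM \<phi> L i j = (if i = 0 \<and> j = 2 then Fval \<phi> h else 0)))"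

lemma three_cases: "i < (3::nat) \<Longrightarrow> i = 0 \<or> i = 1 \<or> i = 2"
  by auto

lemma gY: "graded_UT3_subst \<phi> \<Longrightarrow> a < 3 \<Longrightarrow> b < 3 \<Longrightarrow> a \<noteq> b \<Longrightarrow> \<phi> (Y k) a b = 0"
  unfolding graded_UT3_subst_def by force

lemma gZ: "graded_UT3_subst \<phi> \<Longrightarrow> a < 3 \<Longrightarrow> b < 3 \<Longrightarrow> b \<noteq> Suc a \<Longrightarrow> \<phi> (Z k) a b = 0"
  unfolding graded_UT3_subst_def by force

lemma mmul_diag_right:
  assumes "\<And>l. l < 3 \<Longrightarrow> l \<noteq> j \<Longrightarrow> D l j = 0" "j < 3"
  shows "mmul E D i j = E i j * D j j"
proof -
  have "mmul E D i j = (\<Sum>l<3. if l = j then E i j * D j j else 0)"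
    unfolding mmul_def using assms(1) by (intro sum.cong) auto
  then show ?thesis using assms(2) by simp
qed

lemma mmul_diag_left:
  assumes "\<And>l. l < 3 \<Longrightarrow> l \<noteq> i \<Longrightarrow> D i l = 0" "i < 3"
  shows "mmul D E i j = D i i * E i j"
proof -
  have "mmul D E i j = (\<Sum>l<3. if l = i then D i i * E i j else 0)"
    unfolding mmul_def using assms(1) by (intro sum.cong) auto
  then show ?thesis using assms(2) by simp
qed

lemma mmul_super:
  assumes A: "\<forall>a b. a < 3 \<longrightarrow> b < 3 \<longrightarrow> b \<noteq> Suc a \<longrightarrow> A a b = 0"
    and B: "\<forall>a b. a < 3 \<longrightarrow> b < 3 \<longrightarrow> b \<noteq> Suc a \<longrightarrow> B a b = 0"
    and ij: "i < 3" "j < 3"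
  shows "mmul A B i j = (if i = 0 \<and> j = 2 then A 0 1 * B 1 2 else 0)"
proof -
  have "mmul A B i j = A i 0 * B 0 j + A i 1 * B 1 j + A i 2 * B 2 j"
    by (simp add: mmul_def sum3)
  moreover have "i = 0 \<or> i = 1 \<or> i = 2" "j = 0 \<or> j = 1 \<or> j = 2" using ij by auto
  ultimately show ?thesis using A B by (elim disjE) (simp_all add: eval_nat_numeral)
qed

lemma ev_bracket_Y:
  fixes X :: "'a::comm_ring_1 fa"
  assumes fX: "finite (supp X)" and g: "graded_UT3_subst \<phi>" and ij: "i < 3" "j < 3"
  shows "evalM \<phi> (bracket X (fa_var (Y k))) i j = evalM \<phi> X i j * (\<phi> (Y k) j j - \<phi> (Y k) i i)"
proof -
  have fv: "finite (supp (fa_var (Y k) :: 'a fa))" using lie_fin lie_var by blast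
  define E where "E = evalM \<phi> X"
  define D where "D = evalM \<phi> (fa_var (Y k) :: 'a fa)"
  have D: "a < 3 \<Longrightarrow> b < 3 \<Longrightarrow> D a b = \<phi> (Y k) a b" for a b by (simp add: D_def evalM_var)
  have Doff: "a < 3 \<Longrightarrow> b < 3 \<Longrightarrow> a \<noteq> b \<Longrightarrow> D a b = 0" for a b using D gY[OF g] by simp
  have "evalM \<phi> (bracket X (fa_var (Y k))) i j = mmul E D i j - mmul D E i j"
    using evalM_bracket[OF fX fv ij] by (simp add: E_def D_def)
  also have "\<dots> = E i j * D j j - D i i * E i j"
    using Doff ij by (simp add: mmul_diag_right mmul_diag_left)
  finally show ?thesis using D ij by (simp add: E_def algebra_simps)
qed

lemma fin_lnc: "finite (supp X) \<Longrightarrow> (\<forall>y\<in>set ys. finite (supp y)) \<Longrightarrow> finite (supp (lnc X ys :: 'a::comm_ring_1 fa))"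
proof (induction ys rule: rev_induct)
  case Nil then show ?case by (simp add: lnc_def)
next
  case (snoc y ys) then show ?case by (simp add: lnc_def fin_bracket)
qed

lemma ev_lnc_Y:
  fixes X :: "'a::comm_ring_1 fa"
  assumes fX: "finite (supp X)" and g: "graded_UT3_subst \<phi>" and ij: "i < 3" "j < 3"
  shows "evalM \<phi> (lnc X (map (\<lambda>k. fa_var (Y k)) ks)) i j =
     evalM \<phi> X i j * prod_list (map (\<lambda>k. \<phi> (Y k) j j - \<phi> (Y k) i i) ks)"
proof (induction ks rule: rev_induct)
  case Nil then show ?case by (simp add: lnc_def)
next
  case (snoc k ks)
  have f: "finite (supp (lnc X (map (\<lambda>k. fa_var (Y k)) ks)))"
    using fX lie_fin lie_var by (intro fin_lnc) auto
  have "lnc X (map (\<lambda>k. fa_var (Y k)) (ks @ [k])) = bracket (lnc X (map (\<lambda>k. fa_var (Y k)) ks)) (fa_var (Y k))"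
    by (simp add: lnc_def)
  then show ?case using ev_bracket_Y[OF f g ij, of k] snoc by (simp add: mult.assoc)
qed

lemma ev_bracket_Z:
  fixes X :: "'a::comm_ring_1 fa"
  assumes fX: "finite (supp X)" and g: "graded_UT3_subst \<phi>" and ij: "i < 3" "j < 3"
    and sup: "\<forall>a b. a < 3 \<longrightarrow> b < 3 \<longrightarrow> b \<noteq> Suc a \<longrightarrow> evalM \<phi> X a b = 0"
  shows "evalM \<phi> (bracket X (fa_var (Z c))) i j =
     (if i = 0 \<and> j = 2 then evalM \<phi> X 0 1 * \<phi> (Z c) 1 2 - \<phi> (Z c) 0 1 * evalM \<phi> X 1 2 else 0)"
proof -
  have fv: "finite (supp (fa_var (Z c) :: 'a fa))" using lie_fin lie_var by blast
  define E where "E = evalM \<phi> X"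
  define D where "D = evalM \<phi> (fa_var (Z c) :: 'a fa)"
  have D: "a < 3 \<Longrightarrow> b < 3 \<Longrightarrow> D a b = \<phi> (Z c) a b" for a b by (simp add: D_def evalM_var)
  have Ds: "\<forall>a b. a < 3 \<longrightarrow> b < 3 \<longrightarrow> b \<noteq> Suc a \<longrightarrow> D a b = 0" using D gZ[OF g] by simp
  have Es: "\<forall>a b. a < 3 \<longrightarrow> b < 3 \<longrightarrow> b \<noteq> Suc a \<longrightarrow> E a b = 0" using sup by (simp add: E_def)
  have "evalM \<phi> (bracket X (fa_var (Z c))) i j = mmul E D i j - mmul D E i j"
    using evalM_bracket[OF fX fv ij] by (simp add: E_def D_def)
  also have "\<dots> = (if i = 0 \<and> j = 2 then E 0 1 * D 1 2 - D 0 1 * E 1 2 else 0)"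
    using mmul_super[OF Es Ds ij] mmul_super[OF Ds Es ij] by simp
  finally show ?thesis using D by (simp add: E_def)
qed

lemma reprD:
  assumes "repr L h"
  shows "finite (supp L)" "finite (csupp h)"
    "\<And>\<phi> i j. graded_UT3_subst \<phi> \<Longrightarrow> i < 3 \<Longrightarrow> j < 3 \<Longrightarrow> evalM \<phi> L i j = (if i = 0 \<and> j = 2 then Fval \<phi> h else 0)"
  using assms unfolding repr_def by blast+

lemma reprI:
  assumes "finite (supp L)" "finite (csupp h)"
    "\<And>\<phi> i j. graded_UT3_subst \<phi> \<Longrightarrow> i < 3 \<Longrightarrow> j < 3 \<Longrightarrow> evalM \<phi> L i j = (if i = 0 \<and> j = 2 then Fval \<phi> h else 0)"
  shows "repr L h"
  using assms unfolding repr_def by blast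




definition yl :: "nat \<Rightarrow> (nat \<Rightarrow> nat) \<Rightarrow> nat list" where
  "yl n a = concat (map (\<lambda>i. replicate (a i) i) [1..<n+1])"

lemma ys_block_yl: "ys_block n a = map (\<lambda>k. fa_var (Y k)) (yl n a)"
  by (simp add: ys_block_def yl_def map_concat comp_def)

definition mon :: "nat \<Rightarrow> (nat \<Rightarrow> nat) \<Rightarrow> (nat \<Rightarrow> nat) \<Rightarrow> nat list" where
  "mon n a b = map (\<lambda>i. 2*i) (yl n a) @ map (\<lambda>i. 2*i+1) (yl n b)"

definition monp :: "nat list \<Rightarrow> 'a::comm_ring_1 cp" where
  "monp L = (\<lambda>m. if m = mset L then 1 else 0)"

lemma csupp_monp: "csupp (monp L :: 'a::field cp) = {mset L}"
  by (auto simp: csupp_def monp_def)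

lemma peval_monp: "peval \<xi> (monp L :: 'a::field cp) = prod_list (map \<xi> L)"
  unfolding peval_def csupp_monp by (simp add: monp_def prod_mset_prod_list[symmetric])

lemma evalM_var_super:
  assumes g: "graded_UT3_subst \<phi>"
  shows "\<forall>a b. a < 3 \<longrightarrow> b < 3 \<longrightarrow> b \<noteq> Suc a \<longrightarrow> evalM \<phi> (fa_var (Z c) :: 'a::comm_ring_1 fa) a b = 0"
  using gZ[OF g] by (simp add: evalM_var)

lemma fin_var: "finite (supp (fa_var x :: 'a::comm_ring_1 fa))"
  using lie_fin lie_var by blast

lemma prod_list_cong: "(\<And>x. x \<in> set L \<Longrightarrow> f x = g x) \<Longrightarrow> prod_list (map f L) = prod_list (map g L)"
  by (metis map_cong)

lemma repr_base:
  "repr (lnc (fa_var (Z 1)) (ys_block n a @ [fa_var (Z 2)] @ ys_block n b) :: 'a::field fa)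
        (monp (mon n a b))"
proof -
  define z1 where "z1 = (fa_var (Z 1) :: 'a fa)"
  define X1 where "X1 = lnc z1 (ys_block n a)"
  define X2 where "X2 = bracket X1 (fa_var (Z 2))"
  have eq: "lnc (fa_var (Z 1)) (ys_block n a @ [fa_var (Z 2)] @ ys_block n b) = lnc X2 (ys_block n b)"
    by (simp add: lnc_def X2_def X1_def z1_def)
  have fz1: "finite (supp z1)" by (simp add: z1_def fin_var)
  have fX1: "finite (supp X1)" unfolding X1_def ys_block_yl using fz1 fin_var by (intro fin_lnc) auto
  have fX2: "finite (supp X2)" unfolding X2_def using fX1 fin_var by (intro fin_bracket)
  have fX3: "finite (supp (lnc X2 (ys_block n b)))" unfolding ys_block_yl using fX2 fin_var by (intro fin_lnc) auto
  have main: "evalM \<phi> (lnc X2 (ys_block n b)) i j = (if i = 0 \<and> j = 2 then Fval \<phi> (monp (mon n a b)) else 0)"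
    if g: "graded_UT3_subst \<phi>" and ij: "i < 3" "j < 3" for \<phi> i j
  proof -
    have e1: "evalM \<phi> X1 c d = \<phi> (Z 1) c d * prod_list (map (\<lambda>k. \<phi> (Y k) d d - \<phi> (Y k) c c) (yl n a))"
      if "c < 3" "d < 3" for c d
      unfolding X1_def ys_block_yl using ev_lnc_Y[OF fz1 g that] evalM_var[of d \<phi> "Z 1"] that
      by (simp add: z1_def)
    have s1: "\<forall>c d. c < 3 \<longrightarrow> d < 3 \<longrightarrow> d \<noteq> Suc c \<longrightarrow> evalM \<phi> X1 c d = 0"
      using e1 gZ[OF g] by simp
    have e2: "evalM \<phi> X2 c d = (if c = 0 \<and> d = 2 then evalM \<phi> X1 0 1 * \<phi> (Z 2) 1 2 - \<phi> (Z 2) 0 1 * evalM \<phi> X1 1 2 else 0)"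
      if "c < 3" "d < 3" for c d
      unfolding X2_def using ev_bracket_Z[OF fX1 g that s1] .
    have e3: "evalM \<phi> (lnc X2 (ys_block n b)) i j = evalM \<phi> X2 i j * prod_list (map (\<lambda>k. \<phi> (Y k) j j - \<phi> (Y k) i i) (yl n b))"
      unfolding ys_block_yl using ev_lnc_Y[OF fX2 g ij] .
    define PU where "PU = prod_list (map (uu \<phi>) (yl n a))"
    define PV where "PV = prod_list (map (vv \<phi>) (yl n a))"
    define PW where "PW = prod_list (map (\<lambda>k. uu \<phi> k + vv \<phi> k) (yl n b))"
    have "prod_list (map (xu \<phi>) (mon n a b)) = PU * PW"
      by (simp add: mon_def PU_def PW_def xu_def comp_def)
    moreover have "prod_list (map (xv \<phi>) (mon n a b)) = PV * PW"
      by (simp add: mon_def PV_def PW_def xv_def comp_def)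
    moreover have "evalM \<phi> X1 0 1 = \<phi> (Z 1) 0 1 * PU"
    proof -
      have "prod_list (map (\<lambda>k. \<phi> (Y k) 1 1 - \<phi> (Y k) 0 0) (yl n a)) = PU"
        unfolding PU_def by (rule prod_list_cong) (simp add: uu_def)
      then show ?thesis using e1[of 0 1] by simp
    qed
    moreover have "evalM \<phi> X1 1 2 = \<phi> (Z 1) 1 2 * PV"
    proof -
      have "prod_list (map (\<lambda>k. \<phi> (Y k) 2 2 - \<phi> (Y k) 1 1) (yl n a)) = PV"
        unfolding PV_def by (rule prod_list_cong) (simp add: vv_def)
      then show ?thesis using e1[of 1 2] by simp
    qed
    moreover have "prod_list (map (\<lambda>k. \<phi> (Y k) 2 2 - \<phi> (Y k) 0 0) (yl n b)) = PW"
      unfolding PW_def by (rule prod_list_cong) (simp add: uu_def vv_def)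
    ultimately show ?thesis
      using e3 e2[OF ij] by (auto simp: Fval_def peval_monp algebra_simps)
  qed
  show ?thesis unfolding eq using fX3 main by (intro reprI) (simp_all add: csupp_monp)
qed

lemma Fval_cadd:
  "finite (csupp p) \<Longrightarrow> finite (csupp q) \<Longrightarrow> Fval \<phi> (cadd p q) = Fval \<phi> p + Fval \<phi> q"
  unfolding Fval_def by (simp add: peval_cadd right_diff_distrib distrib_left)

lemma Fval_csmult:
  "finite (csupp p) \<Longrightarrow> Fval \<phi> (csmult c p) = c * Fval \<phi> p"
  unfolding Fval_def by (simp add: peval_csmult right_diff_distrib mult.left_commute)

lemma repr_add:
  assumes r1: "repr L1 h1" and r2: "repr L2 h2"
  shows "repr (fa_add L1 L2) (cadd h1 h2)"
proof -
  note f1 = reprD(1,2)[OF r1]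
  note f2 = reprD(1,2)[OF r2]
  have f: "finite (csupp (cadd h1 h2))"
  proof -
    have "csupp (cadd h1 h2) \<subseteq> csupp h1 \<union> csupp h2" by (auto simp: csupp_def cadd_def)
    then show ?thesis using f1 f2 finite_subset by blast
  qed
  have "evalM \<phi> (fa_add L1 L2) i j = (if i = 0 \<and> j = 2 then Fval \<phi> (cadd h1 h2) else 0)"
    if "graded_UT3_subst \<phi>" "i < 3" "j < 3" for \<phi> i j
  proof -
    have "evalM \<phi> (fa_add L1 L2) i j = evalM \<phi> L1 i j + evalM \<phi> L2 i j" using f1 f2 by (simp add: evalM_add)
    then show ?thesis using reprD(3)[OF r1 that] reprD(3)[OF r2 that] f1 f2 by (simp add: Fval_cadd)
  qed
  then show ?thesis using f f1 f2 by (intro reprI fin_add)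
qed

lemma repr_smult:
  assumes r: "repr L h"
  shows "repr (fa_smult c L) (csmult c h)"
proof -
  note f1 = reprD(1,2)[OF r]
  have f: "finite (csupp (csmult c h))"
  proof -
    have "csupp (csmult c h) \<subseteq> csupp h" by (auto simp: csupp_def csmult_def)
    then show ?thesis using f1 finite_subset by blast
  qed
  have "evalM \<phi> (fa_smult c L) i j = (if i = 0 \<and> j = 2 then Fval \<phi> (csmult c h) else 0)"
    if "graded_UT3_subst \<phi>" "i < 3" "j < 3" for \<phi> i j
  proof -
    have "evalM \<phi> (fa_smult c L) i j = c * evalM \<phi> L i j" using f1 by (simp add: evalM_smult)
    then show ?thesis using reprD(3)[OF r that] f1 by (simp add: Fval_csmult)
  qed
  then show ?thesis using f f1 by (intro reprI fin_smult)
qed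

lemma repr_zero: "repr (fa_zero :: 'a::comm_ring_1 fa) czero"
  by (rule reprI) (simp_all add: supp_def fa_zero_def csupp_def czero_def evalM_zero[unfolded fa_zero_def] Fval_def peval_czero[unfolded czero_def])

lemma lnc_lie: "X \<in> lie \<Longrightarrow> set ys \<subseteq> lie \<Longrightarrow> lnc X ys \<in> lie"
proof (induction ys rule: rev_induct)
  case Nil then show ?case by (simp add: lnc_def)
next
  case (snoc y ys) then show ?case by (simp add: lnc_def lie_bracket)
qed

lemma B11_lie: "B11 \<subseteq> (lie :: 'a::comm_ring_1 fa set)"
proof
  fix f :: "'a fa" assume "f \<in> B11"
  then obtain n a b where f: "f = lnc (fa_var (Z 1)) (ys_block n a @ [fa_var (Z 2)] @ ys_block n b)"
    by (auto simp: B11_def)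
  show "f \<in> lie" unfolding f by (rule lnc_lie) (auto simp: ys_block_yl intro: lie_var)
qed

lemma lin_span_repr:
  assumes "f \<in> lin_span (B11 :: 'a::field fa set)"
  shows "f \<in> lie \<and> (\<exists>h. repr f h)"
  using assms
proof (induction rule: lin_span.induct)
  case ls_zero then show ?case using repr_zero lie_zero by blast
next
  case (ls_step b p c)
  obtain n a b' where b: "b = lnc (fa_var (Z 1)) (ys_block n a @ [fa_var (Z 2)] @ ys_block n b')"
    using ls_step(1) by (auto simp: B11_def)
  have rb: "repr b (monp (mon n a b'))" unfolding b by (rule repr_base)
  obtain hp where hp: "repr p hp" using ls_step by blast
  have "b \<in> lie" using ls_step(1) B11_lie by blast
  then show ?case using ls_step hp repr_add[OF repr_smult[OF rb] hp]
    by (blast intro: lie.intros)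
qed




lemma T_idealD:
  assumes "T_ideal J"
  shows "J \<subseteq> lie" "fa_zero \<in> J" "\<And>p q. p \<in> J \<Longrightarrow> q \<in> J \<Longrightarrow> fa_add p q \<in> J"
    "\<And>c p. p \<in> J \<Longrightarrow> fa_smult c p \<in> J" "\<And>p q. p \<in> J \<Longrightarrow> q \<in> lie \<Longrightarrow> bracket p q \<in> J"
    "\<And>p \<sigma>. p \<in> J \<Longrightarrow> graded_endo \<sigma> \<Longrightarrow> subst \<sigma> p \<in> J"
  using assms unfolding T_ideal_def by blast+

lemma fin_subst:
  fixes p :: "'a::comm_ring_1 fa"
  assumes fp: "finite (supp p)" and fin: "\<forall>x. finite (supp (\<sigma> x))"
  shows "finite (supp (subst \<sigma> p))"
proof -
  define WS where "WS = (\<Union>u\<in>supp p. supp (fa_prod (map \<sigma> u)))"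
  have fWS: "finite WS" using fp fa_prod_fin[OF fin] by (simp add: WS_def)
  have "supp (subst \<sigma> p) \<subseteq> WS"
  proof
    fix w assume "w \<in> supp (subst \<sigma> p)"
    then have "(\<Sum>u\<in>supp p. p u * fa_prod (map \<sigma> u) w) \<noteq> 0" by (simp add: supp_def subst_def)
    then obtain u where "u \<in> supp p" "p u * fa_prod (map \<sigma> u) w \<noteq> 0" by (metis (no_types, lifting) sum.neutral)
    then show "w \<in> WS" by (auto simp: WS_def supp_def)
  qed
  then show ?thesis using fWS finite_subset by blast
qed

lemma fin_csupp_tvar: "finite (csupp h) \<Longrightarrow> finite (csupp (tvar x h))"
  by (simp add: csupp_tvar)

lemma repr_tvar_odd:
  fixes L :: "'a::field fa"
  assumes r: "repr L h" and x: "odd x"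
  shows "repr (bracket L (fa_var (Y (x div 2)))) (tvar x h)"
proof -
  note f = reprD(1,2)[OF r]
  define k where "k = x div 2"
  have "evalM \<phi> (bracket L (fa_var (Y k))) i j = (if i = 0 \<and> j = 2 then Fval \<phi> (tvar x h) else 0)"
    if g: "graded_UT3_subst \<phi>" and ij: "i < 3" "j < 3" for \<phi> i j
  proof -
    have e: "evalM \<phi> (bracket L (fa_var (Y k))) i j = evalM \<phi> L i j * (\<phi> (Y k) j j - \<phi> (Y k) i i)"
      by (rule ev_bracket_Y[OF f(1) g ij])
    have xx: "xu \<phi> x = \<phi> (Y k) 2 2 - \<phi> (Y k) 0 0" "xv \<phi> x = \<phi> (Y k) 2 2 - \<phi> (Y k) 0 0"
      using x by (simp_all add: xu_def xv_def uu_def vv_def k_def)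
    have F: "Fval \<phi> (tvar x h) = Fval \<phi> h * (\<phi> (Y k) 2 2 - \<phi> (Y k) 0 0)"
      unfolding Fval_def peval_tvar xx by (simp add: algebra_simps)
    show ?thesis using e reprD(3)[OF r g ij] F by simp
  qed
  then show ?thesis unfolding k_def[symmetric]
    using f by (intro reprI fin_bracket fin_var fin_csupp_tvar) auto
qed

lemma repr_tvar_even:
  fixes L :: "'a::field fa"
  assumes r: "repr L h" and x: "even x"
  shows "repr (subst (sigZ (x div 2)) L) (tvar x h)"
proof -
  note f = reprD(1,2)[OF r]
  define k where "k = x div 2"
  have "evalM \<phi> (subst (sigZ k) L) i j = (if i = 0 \<and> j = 2 then Fval \<phi> (tvar x h) else 0)"
    if g: "graded_UT3_subst \<phi>" and ij: "i < 3" "j < 3" for \<phi> i j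
  proof -
    define \<phi>' where "\<phi>' v = evalM \<phi> (sigZ k v :: 'a fa)" for v
    have e: "evalM \<phi> (subst (sigZ k) L) i j = evalM \<phi>' L i j"
      unfolding \<phi>'_def using f(1) fin_sigZ ij by (intro evalM_subst) auto
    have p1: "\<phi>' (Z 1) a b = \<phi> (Z 1) a b * (\<phi> (Y k) b b - \<phi> (Y k) a a)" if "a < 3" "b < 3" for a b
      using ev_bracket_Y[OF fin_var g that, of "Z 1" k] evalM_var[of b \<phi> "Z 1"] that
      by (simp add: \<phi>'_def sigZ_def)
    have p2: "\<phi>' v a b = \<phi> v a b" if "v \<noteq> Z 1" "a < 3" "b < 3" for v a b
      using that by (simp add: \<phi>'_def sigZ_def evalM_var)
    have g': "graded_UT3_subst \<phi>'"
      unfolding graded_UT3_subst_def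
    proof (intro allI impI)
      fix v a b assume ab: "a < 3" "b < 3" and nz: "\<phi>' v a b \<noteq> 0"
      show "b = a + vdeg v"
      proof (cases "v = Z 1")
        case True
        then have "\<phi> (Z 1) a b \<noteq> 0" using nz p1[OF ab] by auto
        then show ?thesis using g ab True unfolding graded_UT3_subst_def by blast
      next
        case False
        then have "\<phi> v a b \<noteq> 0" using nz p2[OF _ ab] by auto
        then show ?thesis using g ab unfolding graded_UT3_subst_def by blast
      qed
    qed
    have xs: "xu \<phi>' = xu \<phi>" "xv \<phi>' = xv \<phi>"
      by (rule ext, simp add: xu_def xv_def uu_def vv_def p2)+
    have xx: "xu \<phi> x = \<phi> (Y k) 1 1 - \<phi> (Y k) 0 0" "xv \<phi> x = \<phi> (Y k) 2 2 - \<phi> (Y k) 1 1"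
      using x by (simp_all add: xu_def xv_def uu_def vv_def k_def)
    have a1: "\<phi>' (Z 1) 0 1 = \<phi> (Z 1) 0 1 * (\<phi> (Y k) 1 1 - \<phi> (Y k) 0 0)" using p1[of 0 1] by simp
    have b1: "\<phi>' (Z 1) 1 2 = \<phi> (Z 1) 1 2 * (\<phi> (Y k) 2 2 - \<phi> (Y k) 1 1)" using p1[of 1 2] by simp
    have a2: "\<phi>' (Z 2) 0 1 = \<phi> (Z 2) 0 1" using p2[of "Z 2" 0 1] by simp
    have b2: "\<phi>' (Z 2) 1 2 = \<phi> (Z 2) 1 2" using p2[of "Z 2" 1 2] by simp
    have F: "Fval \<phi>' h = Fval \<phi> (tvar x h)"
      unfolding Fval_def peval_tvar xx xs a1 b1 a2 b2 by (simp add: algebra_simps)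
    show ?thesis using e reprD(3)[OF r g' ij] F by simp
  qed
  moreover have "finite (supp (subst (sigZ k) L))"
    using f(1) fin_sigZ by (intro fin_subst) auto
  ultimately show ?thesis unfolding k_def[symmetric]
    using f by (intro reprI fin_csupp_tvar) auto
qed

lemma repr_ren:
  fixes L :: "'a::field fa"
  assumes r: "repr L h" and sm: "strict_mono \<rho>"
  shows "repr (subst (sigR \<rho>) L) (cren \<rho> h)"
proof -
  note f = reprD(1,2)[OF r]
  have "evalM \<phi> (subst (sigR \<rho>) L) i j = (if i = 0 \<and> j = 2 then Fval \<phi> (cren \<rho> h) else 0)"
    if g: "graded_UT3_subst \<phi>" and ij: "i < 3" "j < 3" for \<phi> i j
  proof -
    define \<phi>' where "\<phi>' v = evalM \<phi> (sigR \<rho> v :: 'a fa)" for v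
    have e: "evalM \<phi> (subst (sigR \<rho>) L) i j = evalM \<phi>' L i j"
      unfolding \<phi>'_def using f(1) fin_sigR ij by (intro evalM_subst) auto
    have pY: "\<phi>' (Y c) a b = \<phi> (Y (\<rho> c)) a b" if "a < 3" "b < 3" for c a b
      using that by (simp add: \<phi>'_def sigR_def evalM_var)
    have pZ: "\<phi>' (Z c) a b = \<phi> (Z c) a b" if "a < 3" "b < 3" for c a b
      using that by (simp add: \<phi>'_def sigR_def evalM_var)
    have pW: "\<phi>' (W c) a b = \<phi> (W c) a b" if "a < 3" "b < 3" for c a b
      using that by (simp add: \<phi>'_def sigR_def evalM_var)
    have g': "graded_UT3_subst \<phi>'"
      unfolding graded_UT3_subst_def
    proof (intro allI impI)
      fix v a b assume ab: "a < 3" "b < 3" and nz: "\<phi>' v a b \<noteq> 0"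
      show "b = a + vdeg v"
      proof (cases v)
        case (Y c)
        then have "\<phi> (Y (\<rho> c)) a b \<noteq> 0" using nz pY[OF ab] by auto
        then show ?thesis using g ab Y unfolding graded_UT3_subst_def by force
      next
        case (Z c)
        then have "\<phi> (Z c) a b \<noteq> 0" using nz pZ[OF ab] by auto
        then show ?thesis using g ab Z unfolding graded_UT3_subst_def by force
      next
        case (W c)
        then have "\<phi> (W c) a b \<noteq> 0" using nz pW[OF ab] by auto
        then show ?thesis using g ab W unfolding graded_UT3_subst_def by force
      qed
    qed
    have hm: "even (hmap \<rho> c) = even c" "hmap \<rho> c div 2 = \<rho> (c div 2)" for c
      by (simp_all add: hmap_def)
    have xs: "xu \<phi>' = xu \<phi> \<circ> hmap \<rho>" "xv \<phi>' = xv \<phi> \<circ> hmap \<rho>"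
      by (rule ext, simp add: xu_def xv_def uu_def vv_def pY hm)+
    have F: "Fval \<phi>' h = Fval \<phi> (cren \<rho> h)"
      unfolding Fval_def peval_cren[OF sm] xs using pZ by simp
    show ?thesis using e reprD(3)[OF r g' ij] F by simp
  qed
  moreover have "finite (supp (subst (sigR \<rho>) L))"
    using f(1) fin_sigR by (intro fin_subst) auto
  moreover have "finite (csupp (cren \<rho> h))" using f(2) by (simp add: csupp_cren[OF sm])
  ultimately show ?thesis by (intro reprI) auto
qed

lemma closure_repr:
  fixes J :: "'a::field fa set"
  assumes TJ: "T_ideal J" and gens: "\<forall>g\<in>G0. \<exists>L\<in>J. repr L g" and h: "h \<in> Gc G0"
  shows "\<exists>L\<in>J. repr L h"
  using h
proof (induction h rule: Gc.induct)
  case (Gc_gen g) then show ?case using gens by blast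
next
  case Gc_zero then show ?case using T_idealD(2)[OF TJ] repr_zero by blast
next
  case (Gc_add p q)
  then obtain L1 L2 where "L1 \<in> J" "repr L1 p" "L2 \<in> J" "repr L2 q" by blast
  then show ?case using T_idealD(3)[OF TJ] repr_add by blast
next
  case (Gc_smult p c)
  then obtain L where "L \<in> J" "repr L p" by blast
  then show ?case using T_idealD(4)[OF TJ] repr_smult by blast
next
  case (Gc_tvar p x)
  then obtain L where L: "L \<in> J" "repr L p" by blast
  show ?case
  proof (cases "even x")
    case True
    have "subst (sigZ (x div 2)) L \<in> J" using T_idealD(6)[OF TJ L(1) graded_sigZ] .
    then show ?thesis using repr_tvar_even[OF L(2) True] by blast
  next
    case False
    have "bracket L (fa_var (Y (x div 2))) \<in> J" using T_idealD(5)[OF TJ L(1) lie_var] .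
    then show ?thesis using repr_tvar_odd[OF L(2)] False by blast
  qed
next
  case (Gc_ren p \<rho>)
  then obtain L where L: "L \<in> J" "repr L p" by blast
  have "subst (sigR \<rho>) L \<in> J" using T_idealD(6)[OF TJ L(1) graded_sigR] .
  then show ?case using repr_ren[OF L(2) Gc_ren(2)] by blast
qed




lemma part1:
  fixes dummy :: "'a::field"
  shows "\<not> (\<exists>f :: nat \<Rightarrow> 'a fa. (\<forall>i\<ge>1. type11 (f i)) \<and>
            (\<forall>i\<ge>2. f i \<notin> T_gen ({f j | j. 1 \<le> j \<and> j < i} \<union> I_UT3)))"
proof
  assume "\<exists>f :: nat \<Rightarrow> 'a fa. (\<forall>i\<ge>1. type11 (f i)) \<and>
            (\<forall>i\<ge>2. f i \<notin> T_gen ({f j | j. 1 \<le> j \<and> j < i} \<union> I_UT3))"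
  then obtain f :: "nat \<Rightarrow> 'a fa" where t: "\<forall>i\<ge>1. type11 (f i)"
    and bad: "\<forall>i\<ge>2. f i \<notin> T_gen ({f j | j. 1 \<le> j \<and> j < i} \<union> I_UT3)" by blast
  have ex: "f i \<in> lie \<and> (\<exists>h. repr (f i) h)" if "i \<ge> 1" for i
    using t that lin_span_repr by (auto simp: type11_def)
  define g where "g i = (if i \<ge> 1 then (SOME h. repr (f i) h) else czero)" for i
  have rg: "repr (f i) (g i)" if "i \<ge> 1" for i
  proof -
    have "\<exists>h. repr (f i) h" using ex[OF that] by blast
    then have "repr (f i) (SOME h. repr (f i) h)" by (rule someI_ex)
    then show ?thesis using that by (simp add: g_def)
  qed
  have fg: "\<forall>i. finite (csupp (g i))"
  proof
    fix i show "finite (csupp (g i))"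
    proof (cases "i \<ge> 1")
      case True show ?thesis using reprD(2)[OF rg[OF True]] .
    next
      case False then show ?thesis by (simp add: g_def czero_def csupp_def)
    qed
  qed
  obtain i where i: "i \<ge> 2" "g i \<in> Gc {g j | j. 1 \<le> j \<and> j < i}"
    using poly_chain[OF fg] by blast
  have "f i \<in> T_gen ({f j | j. 1 \<le> j \<and> j < i} \<union> I_UT3)"
    unfolding T_gen_def
  proof (intro InterI, clarify)
    fix J :: "'a fa set" assume TJ: "T_ideal J" and sub: "{f j | j. 1 \<le> j \<and> j < i} \<union> I_UT3 \<subseteq> J"
    have gens: "\<forall>x\<in>{g j | j. 1 \<le> j \<and> j < i}. \<exists>L\<in>J. repr L x"
    proof
      fix x assume "x \<in> {g j | j. 1 \<le> j \<and> j < i}"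
      then obtain j where j: "x = g j" "1 \<le> j" "j < i" by blast
      then have "f j \<in> J" using sub by blast
      then show "\<exists>L\<in>J. repr L x" using rg[OF j(2)] j(1) by blast
    qed
    obtain L where L: "L \<in> J" "repr L (g i)" using closure_repr[OF TJ gens i(2)] by blast
    have i1: "i \<ge> 1" using i(1) by simp
    define D where "D = fa_add (f i) (fa_smult (-1) L)"
    have fi: "f i \<in> lie" using ex[OF i1] by blast
    have Llie: "L \<in> lie" using L(1) T_idealD(1)[OF TJ] by blast
    have Dlie: "D \<in> lie" unfolding D_def using fi Llie by (intro lie.intros)
    have "evalM \<phi> D a b = 0" if g: "graded_UT3_subst \<phi>" and ab: "a < 3" "b < 3" for \<phi> a b
    proof -
      have "evalM \<phi> D a b = evalM \<phi> (f i) a b + (-1) * evalM \<phi> L a b"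
        unfolding D_def using lie_fin[OF fi] lie_fin[OF Llie]
        by (simp add: evalM_add evalM_smult fin_smult)
      then show ?thesis using reprD(3)[OF rg[OF i1] g ab] reprD(3)[OF L(2) g ab] by simp
    qed
    then have "D \<in> I_UT3" using Dlie unfolding I_UT3_def by blast
    then have DJ: "D \<in> J" using sub by blast
    have "f i = fa_add D L" by (rule ext) (simp add: D_def fa_add_def fa_smult_def)
    then show "f i \<in> J" using T_idealD(3)[OF TJ DJ L(1)] by simp
  qed
  then show False using bad i(1) by blast
qed

lemma part2:
  fixes J :: "'a::field fa set"
  assumes TJ: "T_ideal J" and IJ: "I_UT3 \<subseteq> J"
  shows "\<exists>A. finite A \<and> A \<subseteq> {f \<in> J. type11 f} \<and> (\<forall>f\<in>J. type11 f \<longrightarrow> f \<in> T_gen (A \<union> I_UT3))"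
proof (rule ccontr)
  assume na: "\<not> ?thesis"
  define step where "step A = (SOME f. f \<in> J \<and> type11 f \<and> f \<notin> T_gen (A \<union> I_UT3))" for A
  have step: "step A \<in> J \<and> type11 (step A) \<and> step A \<notin> T_gen (A \<union> I_UT3)"
    if "finite A" "A \<subseteq> {f \<in> J. type11 f}" for A
  proof -
    have "\<exists>f. f \<in> J \<and> type11 f \<and> f \<notin> T_gen (A \<union> I_UT3)" using na that by blast
    then show ?thesis unfolding step_def by (rule someI_ex)
  qed
  define lst where "lst n = rec_nat [] (\<lambda>n l. l @ [step (set l)]) n" for n
  have lst0: "lst 0 = []" by (simp add: lst_def)
  have lstS: "lst (Suc n) = lst n @ [step (set (lst n))]" for n by (simp add: lst_def)
  have lst_map: "lst n = map (\<lambda>k. step (set (lst k))) [0..<n]" for n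
    by (induction n) (simp_all add: lst0 lstS)
  have inv: "set (lst n) \<subseteq> {f \<in> J. type11 f}" for n
  proof (induction n)
    case 0 then show ?case by (simp add: lst0)
  next
    case (Suc n) then show ?case using step[of "set (lst n)"] by (simp add: lstS)
  qed
  define f where "f i = step (set (lst (i - 1)))" for i
  have fs: "{f j | j. 1 \<le> j \<and> j < i} = set (lst (i - 1))" for i
  proof
    show "{f j | j. 1 \<le> j \<and> j < i} \<subseteq> set (lst (i - 1))"
    proof
      fix x assume "x \<in> {f j | j. 1 \<le> j \<and> j < i}"
      then obtain j where "x = f j" "1 \<le> j" "j < i" by blast
      then show "x \<in> set (lst (i - 1))" unfolding lst_map[of "i - 1"] f_def set_map
        by (intro image_eqI[of _ _ "j - 1"]) auto
    qed
  next
    show "set (lst (i - 1)) \<subseteq> {f j | j. 1 \<le> j \<and> j < i}"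
    proof
      fix x assume "x \<in> set (lst (i - 1))"
      then obtain k where "k < i - 1" "x = step (set (lst k))" unfolding lst_map[of "i - 1"] by auto
      then show "x \<in> {f j | j. 1 \<le> j \<and> j < i}" unfolding f_def
        by (intro CollectI exI[of _ "Suc k"]) auto
    qed
  qed
  have "(\<forall>i\<ge>1. type11 (f i)) \<and> (\<forall>i\<ge>2. f i \<notin> T_gen ({f j | j. 1 \<le> j \<and> j < i} \<union> I_UT3))"
    using step[OF _ inv] unfolding fs by (auto simp: f_def)
  then show False using part1[where 'a='a] by blast
qed

theorem mainTheorem10:
  fixes dummy :: "'a::field"
  assumes "infinite (UNIV :: 'a set)"
  shows "\<not> (\<exists>f :: nat \<Rightarrow> 'a fa. (\<forall>i\<ge>1. type11 (f i)) \<and>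
            (\<forall>i\<ge>2. f i \<notin> T_gen ({f j | j. 1 \<le> j \<and> j < i} \<union> I_UT3)))
     \<and> (\<forall>J :: 'a fa set. T_ideal J \<and> I_UT3 \<subseteq> J \<longrightarrow>
          (\<exists>A. finite A \<and> A \<subseteq> {f \<in> J. type11 f} \<and>
               (\<forall>f\<in>J. type11 f \<longrightarrow> f \<in> T_gen (A \<union> I_UT3))))"
  using part1[where 'a='a] part2[where 'a='a] by blast


end
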